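(* Let $q$ be a positive integer and let $\Gamma$ be a primitive strongly regular graph with $v=(q^2+2q-1)(q^2+3q+1)$ vertices, valency $k$, eigenvalues $e^+ = q$ and $e^- = -q^2-q$, and let $m^-$ be the multiplicity of $e^-$, where $ve^- = m^-(e^- - k)$. If $\Gamma$ has exactly $m^-+1$ Delsarte cocliques, then there exists a strongly regular graph with $q^2(q+3)^2$ vertices and eigenvalues $e^+ = q$ and $e^- = -q^2-2q$.
   Context: A strongly regular graph with parameters $(v,k,\lambda,\mu)$ has $v$ vertices, is $k$-regular, two adjacent vertices have $\lambda$ common neighbours and two distinct non-adjacent vertices have $\mu$ common neighbours; its adjacency matrix has eigenvalues $k \ge e^+ \ge 0 > e^-$, and $m^-$ is the multiplicity of $e^-$. Primitive means the graph and its complement are connected. A Delsarte coclique is a set of pairwise non-adjacent vertices of size $\frac{ve^-}{e^- - k}$. *)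

theory Defs
  imports "Jordan_Normal_Form.Char_Poly"
begin

text \<open>Simple graphs on the vertex set {0..<n}, given by an adjacency predicate E
  (only its values on {0..<n} matter).\<close>

definition simple_graph :: "nat \<Rightarrow> (nat \<Rightarrow> nat \<Rightarrow> bool) \<Rightarrow> bool" where
  "simple_graph n E \<longleftrightarrow> (\<forall>x<n. \<forall>y<n. E x y \<longleftrightarrow> E y x) \<and> (\<forall>x<n. \<not> E x x)"

definition strongly_regular ::
  "nat \<Rightarrow> (nat \<Rightarrow> nat \<Rightarrow> bool) \<Rightarrow> nat \<Rightarrow> nat \<Rightarrow> nat \<Rightarrow> bool" where
  "strongly_regular n E k lam mu \<longleftrightarrow>
     simple_graph n E \<and>
     (\<forall>x<n. card {y. y < n \<and> E x y} = k) \<and>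
     (\<forall>x<n. \<forall>y<n. x \<noteq> y \<and> E x y \<longrightarrow> card {z. z < n \<and> E x z \<and> E y z} = lam) \<and>
     (\<forall>x<n. \<forall>y<n. x \<noteq> y \<and> \<not> E x y \<longrightarrow> card {z. z < n \<and> E x z \<and> E y z} = mu)"

definition connected_graph :: "nat \<Rightarrow> (nat \<Rightarrow> nat \<Rightarrow> bool) \<Rightarrow> bool" where
  "connected_graph n E \<longleftrightarrow>
     (\<forall>x<n. \<forall>y<n. (x, y) \<in> ({(a, b). a < n \<and> b < n \<and> E a b})\<^sup>*)"

definition complement_graph :: "(nat \<Rightarrow> nat \<Rightarrow> bool) \<Rightarrow> nat \<Rightarrow> nat \<Rightarrow> bool" where
  "complement_graph E x y \<longleftrightarrow> x \<noteq> y \<and> \<not> E x y"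

definition primitive :: "nat \<Rightarrow> (nat \<Rightarrow> nat \<Rightarrow> bool) \<Rightarrow> bool" where
  "primitive n E \<longleftrightarrow> connected_graph n E \<and> connected_graph n (complement_graph E)"

definition adj_matrix :: "nat \<Rightarrow> (nat \<Rightarrow> nat \<Rightarrow> bool) \<Rightarrow> real mat" where
  "adj_matrix n E = mat n n (\<lambda>(i, j). if E i j then 1 else 0)"

definition srg_eigenvalues ::
  "nat \<Rightarrow> (nat \<Rightarrow> nat \<Rightarrow> bool) \<Rightarrow> nat \<Rightarrow> real \<Rightarrow> real \<Rightarrow> bool" where
  "srg_eigenvalues n E k ep em \<longleftrightarrow>
     eigenvalue (adj_matrix n E) (real k) \<and>
     eigenvalue (adj_matrix n E) ep \<and> eigenvalue (adj_matrix n E) em \<and>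
     real k \<ge> ep \<and> ep \<ge> 0 \<and> 0 > em \<and>
     (\<forall>r. eigenvalue (adj_matrix n E) r \<longrightarrow> r \<in> {real k, ep, em})"

text \<open>Multiplicity of an eigenvalue (algebraic = geometric, the matrix being symmetric).\<close>
definition eig_mult :: "real mat \<Rightarrow> real \<Rightarrow> nat" where
  "eig_mult A r = order r (char_poly A)"

definition coclique :: "nat \<Rightarrow> (nat \<Rightarrow> nat \<Rightarrow> bool) \<Rightarrow> nat set \<Rightarrow> bool" where
  "coclique n E C \<longleftrightarrow> C \<subseteq> {0..<n} \<and> (\<forall>x\<in>C. \<forall>y\<in>C. \<not> E x y)"

definition delsarte_coclique ::
  "nat \<Rightarrow> (nat \<Rightarrow> nat \<Rightarrow> bool) \<Rightarrow> nat \<Rightarrow> real \<Rightarrow> nat set \<Rightarrow> bool" where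
  "delsarte_coclique n E k em C \<longleftrightarrow>
     coclique n E C \<and> real (card C) = real n * em / (em - real k)"

end

theory Submission
  imports Defs
begin
declare sum_mult_of_bool_eq[simp del] sum_of_bool_mult_eq[simp del]

definition Aop :: "nat \<Rightarrow> (nat \<Rightarrow> nat \<Rightarrow> bool) \<Rightarrow> (nat \<Rightarrow> real) \<Rightarrow> nat \<Rightarrow> real" where
  "Aop n E f x = (\<Sum>y<n. of_bool (E x y) * f y)"

lemma card_lt_eq: "{..<n} \<inter> {z. P z} = {z. z < n \<and> P z}" by auto

lemma srg_sym: "strongly_regular n E k lam mu \<Longrightarrow> x < n \<Longrightarrow> y < n \<Longrightarrow> E x y = E y x"
  unfolding strongly_regular_def simple_graph_def by blast

lemma srg_irr: "strongly_regular n E k lam mu \<Longrightarrow> x < n \<Longrightarrow> \<not> E x x"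
  unfolding strongly_regular_def simple_graph_def by blast

lemma srg_deg: assumes "strongly_regular n E k lam mu" "x < n"
  shows "(\<Sum>y<n. of_bool (E x y) :: real) = real k"
proof -
  have "card {y. y < n \<and> E x y} = k" using assms unfolding strongly_regular_def by blast
  then show ?thesis by (simp add: card_lt_eq)
qed

lemma srg_cn: assumes "strongly_regular n E k lam mu" "x < n" "y < n"
  shows "(\<Sum>z<n. of_bool (E x z) * of_bool (E y z) :: real) =
     (if x = y then real k else if E x y then real lam else real mu)"
proof -
  have "(\<Sum>z<n. of_bool (E x z) * of_bool (E y z) :: real) = (\<Sum>z<n. of_bool (E x z \<and> E y z))"
    by (intro sum.cong) auto
  also have "\<dots> = real (card {z. z < n \<and> E x z \<and> E y z})" by (simp add: card_lt_eq)
  finally have e: "(\<Sum>z<n. of_bool (E x z) * of_bool (E y z) :: real) = real (card {z. z < n \<and> E x z \<and> E y z})" .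
  show ?thesis
  proof (cases "x = y")
    case True
    have "card {z. z < n \<and> E x z \<and> E y z} = card {z. z < n \<and> E x z}" using True by simp
    also have "\<dots> = k" using assms unfolding strongly_regular_def by blast
    finally show ?thesis using e True by simp
  next
    case False
    then show ?thesis using e assms unfolding strongly_regular_def by auto
  qed
qed

lemma srg_A2: assumes srg: "strongly_regular n E k lam mu" and x: "x < n"
  shows "Aop n E (Aop n E f) x = real k * f x + real lam * Aop n E f x
            + real mu * ((\<Sum>z<n. f z) - f x - Aop n E f x)"
proof -
  have "Aop n E (Aop n E f) x = (\<Sum>y<n. \<Sum>z<n. of_bool (E x y) * (of_bool (E y z) * f z))"
    unfolding Aop_def by (simp add: sum_distrib_left)
  also have "\<dots> = (\<Sum>z<n. \<Sum>y<n. of_bool (E x y) * (of_bool (E y z) * f z))"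
    by (rule sum.swap)
  also have "\<dots> = (\<Sum>z<n. (\<Sum>y<n. of_bool (E x y) * of_bool (E z y)) * f z)"
  proof (intro sum.cong refl)
    fix z assume z: "z \<in> {..<n}"
    have "(\<Sum>y<n. of_bool (E x y) * (of_bool (E y z) * f z)) = (\<Sum>y<n. of_bool (E x y) * of_bool (E z y) * f z)"
      by (intro sum.cong refl) (use z srg_sym[OF srg] in auto)
    then show "(\<Sum>y<n. of_bool (E x y) * (of_bool (E y z) * f z)) = (\<Sum>y<n. of_bool (E x y) * of_bool (E z y)) * f z"
      by (simp add: sum_distrib_right)
  qed
  also have "\<dots> = (\<Sum>z<n. (real mu + (real k - real mu) * of_bool (z = x) + (real lam - real mu) * of_bool (E x z)) * f z)"
  proof (intro sum.cong refl)
    fix z assume z: "z \<in> {..<n}"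
    then show "(\<Sum>y<n. of_bool (E x y) * of_bool (E z y)) * f z = (real mu + (real k - real mu) * of_bool (z = x) + (real lam - real mu) * of_bool (E x z)) * f z"
      using srg_cn[OF srg x, of z] srg_irr[OF srg x] by auto
  qed
  also have "\<dots> = (\<Sum>z<n. real mu * f z + (real k - real mu) * (of_bool (z = x) * f z) + (real lam - real mu) * (of_bool (E x z) * f z))"
    by (intro sum.cong refl) (simp add: algebra_simps)
  also have "\<dots> = real mu * (\<Sum>z<n. f z) + (real k - real mu) * (\<Sum>z<n. of_bool (z = x) * f z) + (real lam - real mu) * Aop n E f x"
    unfolding Aop_def by (simp add: sum.distrib sum_distrib_left)
  also have "(\<Sum>z<n. of_bool (z = x) * f z) = f x"
  proof -
    have "(\<Sum>z<n. of_bool (z = x) * f z) = (\<Sum>z\<in>{x}. f z)"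
      by (rule sum.mono_neutral_cong_right) (use x in auto)
    then show ?thesis by simp
  qed
  finally show ?thesis by (simp add: algebra_simps)
qed

lemma srg_sumA: assumes srg: "strongly_regular n E k lam mu"
  shows "(\<Sum>x<n. Aop n E f x) = real k * (\<Sum>x<n. f x)"
proof -
  have "(\<Sum>x<n. Aop n E f x) = (\<Sum>y<n. \<Sum>x<n. of_bool (E x y) * f y)"
    unfolding Aop_def by (rule sum.swap)
  also have "\<dots> = (\<Sum>y<n. real k * f y)"
  proof (intro sum.cong refl)
    fix y assume y: "y \<in> {..<n}"
    have "(\<Sum>x<n. of_bool (E x y) * f y) = (\<Sum>x<n. of_bool (E y x) * f y)"
      by (intro sum.cong refl) (use y srg_sym[OF srg] in auto)
    also have "\<dots> = (\<Sum>x<n. of_bool (E y x)) * f y" by (rule sum_distrib_right[symmetric])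
    finally have "(\<Sum>x<n. of_bool (E x y) * f y) = (\<Sum>x<n. of_bool (E y x)) * f y" .
    then show "(\<Sum>x<n. of_bool (E x y) * f y) = real k * f y" using srg_deg[OF srg, of y] y by simp
  qed
  finally show ?thesis by (simp add: sum_distrib_left)
qed

lemma srg_eig: assumes srg: "strongly_regular n E k lam mu"
  and ev: "\<And>x. x < n \<Longrightarrow> Aop n E f x = \<theta> * f x" and nz: "x0 < n" "f x0 \<noteq> 0" and ne: "\<theta> \<noteq> real k"
  shows "(\<Sum>x<n. f x) = 0" "\<theta>^2 = real k - real mu + (real lam - real mu) * \<theta>"
proof -
  have "(\<Sum>x<n. Aop n E f x) = \<theta> * (\<Sum>x<n. f x)" using ev by (simp add: sum_distrib_left)
  then have "\<theta> * (\<Sum>x<n. f x) = real k * (\<Sum>x<n. f x)" using srg_sumA[OF srg, of f] by linarith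
  then have "(\<theta> - real k) * (\<Sum>x<n. f x) = 0" by (simp add: left_diff_distrib)
  then show s0: "(\<Sum>x<n. f x) = 0" using ne by auto
  have "Aop n E (Aop n E f) x0 = (\<Sum>y<n. of_bool (E x0 y) * (\<theta> * f y))"
    unfolding Aop_def by (intro sum.cong refl) (simp add: ev[unfolded Aop_def])
  also have "\<dots> = \<theta> * Aop n E f x0" unfolding Aop_def by (simp add: sum_distrib_left algebra_simps)
  also have "\<dots> = \<theta>^2 * f x0" using ev nz by (simp add: power2_eq_square)
  finally have "\<theta>^2 * f x0 = real k * f x0 + real lam * (\<theta> * f x0) + real mu * (0 - f x0 - \<theta> * f x0)"
    using srg_A2[OF srg nz(1), of f] s0 ev nz by simp
  then have "(\<theta>^2 - (real k - real mu + (real lam - real mu) * \<theta>)) * f x0 = 0" by (simp add: algebra_simps)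
  then show "\<theta>^2 = real k - real mu + (real lam - real mu) * \<theta>" using nz by simp
qed

lemma srg_quad: assumes srg: "strongly_regular n E k lam mu" and s0: "(\<Sum>x<n. f x) = 0" and x: "x < n"
  shows "Aop n E (Aop n E f) x = (real k - real mu) * f x + (real lam - real mu) * Aop n E f x"
  using srg_A2[OF srg x, of f] s0 by (simp add: algebra_simps)



lemma sq_expand: "finite W \<Longrightarrow> (\<Sum>x\<in>W. (b x - r)^2) = (\<Sum>x\<in>W. (b x)^2) - 2*r*(\<Sum>x\<in>W. b x) + real (card W) * r^2"
  for b :: "'a \<Rightarrow> real"
proof -
  assume "finite W"
  have "(\<Sum>x\<in>W. (b x - r)^2) = (\<Sum>x\<in>W. (b x)^2 - 2*r*b x + r^2)"
    by (intro sum.cong refl) (simp add: power2_diff algebra_simps)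
  also have "\<dots> = (\<Sum>x\<in>W. (b x)^2) - (\<Sum>x\<in>W. 2*r*b x) + (\<Sum>x\<in>W. r^2)"
    by (simp add: sum.distrib sum_subtractf)
  finally show ?thesis by (simp add: sum_distrib_left)
qed

lemma var0: assumes "finite W" "(\<Sum>x\<in>W. b x) = real (card W) * r"
  "(\<Sum>x\<in>W. (b x)^2) = real (card W) * r^2" "x \<in> W"
  shows "b x = (r::real)"
proof -
  have "(\<Sum>x\<in>W. (b x - r)^2) = 0" using sq_expand[OF assms(1), of b r] assms(2,3)
    by (simp add: power2_eq_square algebra_simps)
  then have "\<forall>x\<in>W. (b x - r)^2 = 0" using sum_nonneg_eq_0_iff[OF assms(1), of "\<lambda>x. (b x - r)^2"] by simp
  then show ?thesis using assms(4) by simp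
qed

lemma cs_ineq: assumes "finite W"
  shows "(\<Sum>x\<in>W. b x)^2 \<le> real (card W) * (\<Sum>x\<in>W. (b x)^2)"
proof (cases "card W = 0")
  case True
  then have "W = {}" using assms by simp
  then show ?thesis by simp
next
  case False
  define N where "N = real (card W)"
  have N: "N > 0" using False unfolding N_def by simp
  define m where "m = (\<Sum>x\<in>W. b x) / N"
  have "0 \<le> (\<Sum>x\<in>W. (b x - m)^2)" by (intro sum_nonneg) simp
  also have "\<dots> = (\<Sum>x\<in>W. (b x)^2) - 2*m*(\<Sum>x\<in>W. b x) + N * m^2"
    using sq_expand[OF assms, of b m] unfolding N_def by simp
  also have "\<dots> = (\<Sum>x\<in>W. (b x)^2) - (\<Sum>x\<in>W. b x)^2 / N"
  proof -
    define S where "S = (\<Sum>x\<in>W. b x)"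
    have "2*m*S = 2*S^2/N" unfolding m_def S_def[symmetric] by (simp add: power2_eq_square)
    moreover have "N*m^2 = S^2/N" unfolding m_def S_def[symmetric] using N by (simp add: power2_eq_square)
    ultimately show ?thesis unfolding S_def by simp
  qed
  finally have "(\<Sum>x\<in>W. b x)^2 / N \<le> (\<Sum>x\<in>W. (b x)^2)" by simp
  then have "(\<Sum>x\<in>W. b x)^2 \<le> (\<Sum>x\<in>W. (b x)^2) * N" using N by (simp add: pos_divide_le_eq)
  then show ?thesis unfolding N_def by (simp add: mult.commute)
qed

lemma sum_vanish_diff: "finite A \<Longrightarrow> S \<subseteq> A \<Longrightarrow> (\<And>x. x \<in> S \<Longrightarrow> g x = 0) \<Longrightarrow> sum g (A - S) = sum g A"
  by (rule sum.mono_neutral_left) auto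

lemma sum_if_eq: "finite S \<Longrightarrow> y \<in> S \<Longrightarrow> (\<Sum>y'\<in>S. if y = y' then (a::real) else b) = a + (real (card S) - 1) * b"
proof -
  assume fs: "finite S" and y: "y \<in> S"
  have "(\<Sum>y'\<in>S. if y = y' then a else b) = (if y = y then a else b) + (\<Sum>y'\<in>S - {y}. if y = y' then a else b)"
    by (rule sum.remove[OF fs y])
  also have "(\<Sum>y'\<in>S - {y}. if y = y' then a else b) = (\<Sum>y'\<in>S - {y}. b)" by (intro sum.cong) auto
  also have "\<dots> = (real (card S) - 1) * b"
  proof -
    have "card S > 0" using fs y by (auto simp: card_gt_0_iff)
    then have "card S \<ge> 1" by simp
    then show ?thesis using fs y by (simp add: of_nat_diff)
  qed
  finally show ?thesis by simp
qed

lemma of_nat_sub1: "(m::nat) \<ge> 1 \<Longrightarrow> real (m - 1) = real m - 1" by (simp add: of_nat_diff)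

locale cfg =
  fixes q n :: nat and E :: "nat \<Rightarrow> nat \<Rightarrow> bool" and k c :: nat and Cs :: "nat set set"
  assumes q: "q > 0" and srg: "strongly_regular n E k 0 (q^2)"
    and kdef: "k = q^3 + 2*q^2" and ndef: "n = (q^2+2*q-1)*(q^2+3*q+1)"
    and cdef: "c = (q^2+2*q-1)*(q+1)"
    and Csdef: "Cs = {C. coclique n E C \<and> card C = c}" and cardCs: "card Cs = c + 1"
begin

abbreviation "Q \<equiv> real q"

lemma rk: "real k = Q^3 + 2*Q^2" using kdef by simp
lemma q2: "q^2 + 2*q \<ge> 1" using q by (simp add: Suc_le_eq)
lemma r1: "real (q^2+2*q-1) = Q^2+2*Q-1" using of_nat_sub1[OF q2] by simp
lemma rn: "real n = (Q^2+2*Q-1)*(Q^2+3*Q+1)"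
proof -
  have "real n = real (q^2+2*q-1) * real (q^2+3*q+1)" by (simp only: ndef of_nat_mult)
  then show ?thesis unfolding r1 by simp
qed
lemma rc: "real c = (Q^2+2*Q-1)*(Q+1)"
proof -
  have "real c = real (q^2+2*q-1) * real (q+1)" by (simp only: cdef of_nat_mult)
  then show ?thesis unfolding r1 by simp
qed
lemma c_le_n: "c \<le> n" unfolding cdef ndef by (intro mult_le_mono2) (simp add: power2_eq_square)
lemma Qpos: "Q \<ge> 1" using q by simp

lemma Cs_fin: "finite Cs"
proof (rule ccontr)
  assume "infinite Cs"
  then have "card Cs = 0" by simp
  with cardCs show False by simp
qed
lemma Cs_sub: "C \<in> Cs \<Longrightarrow> C \<subseteq> {..<n}" using Csdef unfolding coclique_def by auto
lemma Cs_finC: "C \<in> Cs \<Longrightarrow> finite C" using Cs_sub finite_subset by blast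
lemma Cs_card: "C \<in> Cs \<Longrightarrow> card C = c" using Csdef by auto
lemma Cs_coc: "C \<in> Cs \<Longrightarrow> x \<in> C \<Longrightarrow> y \<in> C \<Longrightarrow> \<not> E x y" using Csdef unfolding coclique_def by auto

lemma sym: "x < n \<Longrightarrow> y < n \<Longrightarrow> E x y = E y x" using srg_sym[OF srg] .
lemma symC: "C \<in> Cs \<Longrightarrow> y \<in> C \<Longrightarrow> x < n \<Longrightarrow> E x y = E y x"
  using sym Cs_sub by blast
lemma irr: "x < n \<Longrightarrow> \<not> E x x" using srg_irr[OF srg] .

lemma cn_pair: "C \<in> Cs \<Longrightarrow> y \<in> C \<Longrightarrow> y' \<in> C \<Longrightarrow>
   (\<Sum>z<n. of_bool (E y z) * of_bool (E y' z) :: real) = (if y = y' then real k else Q^2)"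
proof -
  assume a: "C \<in> Cs" "y \<in> C" "y' \<in> C"
  then have "y < n" "y' < n" using Cs_sub by auto
  then show ?thesis using srg_cn[OF srg, of y y'] Cs_coc[OF a] by auto
qed

lemma sum_C_pairs: assumes "S \<subseteq> C" "C \<in> Cs"
  shows "(\<Sum>y\<in>S. \<Sum>y'\<in>S. (\<Sum>z<n. of_bool (E y z) * of_bool (E y' z) :: real))
     = real (card S) * (real k + (real (card S) - 1) * Q^2)"
proof -
  have fs: "finite S" using assms Cs_finC finite_subset by blast
  have "(\<Sum>y\<in>S. \<Sum>y'\<in>S. (\<Sum>z<n. of_bool (E y z) * of_bool (E y' z) :: real))
      = (\<Sum>y\<in>S. \<Sum>y'\<in>S. if y = y' then real k else Q^2)"
  proof (intro sum.cong refl)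
    fix y y' assume "y \<in> S" "y' \<in> S"
    then show "(\<Sum>z<n. of_bool (E y z) * of_bool (E y' z) :: real) = (if y = y' then real k else Q^2)"
      using cn_pair[OF assms(2), of y y'] assms(1) \<open>y \<in> S\<close> \<open>y' \<in> S\<close> by (simp add: subset_iff)
  qed
  also have "\<dots> = (\<Sum>y\<in>S. real k + (real (card S) - 1) * Q^2)"
    by (intro sum.cong refl) (rule sum_if_eq[OF fs])
  finally show ?thesis by simp
qed

lemma D1: assumes C: "C \<in> Cs" and x: "x < n" "x \<notin> C"
  shows "(\<Sum>y\<in>C. of_bool (E x y) :: real) = Q^2 + Q"
proof -
  define W where "W = {..<n} - C"
  define a where "a = (\<lambda>x. (\<Sum>y\<in>C. of_bool (E x y) :: real))"
  have fW: "finite W" unfolding W_def by simp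
  have cW: "real (card W) = real n - real c"
    unfolding W_def using C Cs_sub Cs_card Cs_finC by (simp add: card_Diff_subset of_nat_diff c_le_n)
  have vanish: "\<And>y x. y \<in> C \<Longrightarrow> x \<in> C \<Longrightarrow> of_bool (E y x) = (0::real)" using C Cs_coc by auto
  have s1: "(\<Sum>x\<in>W. a x) = real c * real k"
  proof -
    have "(\<Sum>x\<in>W. a x) = (\<Sum>y\<in>C. \<Sum>x\<in>W. of_bool (E x y))" unfolding a_def by (rule sum.swap)
    also have "\<dots> = (\<Sum>y\<in>C. \<Sum>x<n. of_bool (E y x))"
    proof (rule sum.cong[OF refl])
      fix y assume y: "y \<in> C"
      have "(\<Sum>x\<in>W. of_bool (E x y) :: real) = (\<Sum>x\<in>W. of_bool (E y x))"
        by (intro sum.cong refl) (simp add: W_def symC[OF C y])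
      also have "\<dots> = (\<Sum>x<n. of_bool (E y x))" unfolding W_def
        by (rule sum_vanish_diff) (use C Cs_sub vanish y in auto)
      finally show "(\<Sum>x\<in>W. of_bool (E x y) :: real) = (\<Sum>x<n. of_bool (E y x))" .
    qed
    also have "\<dots> = (\<Sum>y\<in>C. real k)" by (intro sum.cong refl) (use srg_deg[OF srg] C Cs_sub in auto)
    finally show ?thesis using Cs_card[OF C] by simp
  qed
  have s2: "(\<Sum>x\<in>W. (a x)^2) = real c * (real k + (real c - 1) * Q^2)"
  proof -
    have "(\<Sum>x\<in>W. (a x)^2) = (\<Sum>x\<in>W. \<Sum>y\<in>C. \<Sum>y'\<in>C. of_bool (E x y) * of_bool (E x y'))"
      unfolding a_def by (simp add: power2_eq_square sum_product)
    also have "\<dots> = (\<Sum>y\<in>C. \<Sum>x\<in>W. \<Sum>y'\<in>C. of_bool (E x y) * of_bool (E x y'))"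
      by (rule sum.swap)
    also have "\<dots> = (\<Sum>y\<in>C. \<Sum>y'\<in>C. \<Sum>x\<in>W. of_bool (E x y) * of_bool (E x y'))"
      by (rule sum.cong[OF refl], rule sum.swap)
    also have "\<dots> = (\<Sum>y\<in>C. \<Sum>y'\<in>C. \<Sum>x<n. of_bool (E y x) * of_bool (E y' x))"
    proof (rule sum.cong[OF refl], rule sum.cong[OF refl])
      fix y y' assume y: "y \<in> C" and y': "y' \<in> C"
      have "(\<Sum>x\<in>W. of_bool (E x y) * of_bool (E x y') :: real) = (\<Sum>x\<in>W. of_bool (E y x) * of_bool (E y' x))"
        by (intro sum.cong refl) (simp add: W_def symC[OF C y] symC[OF C y'])
      also have "\<dots> = (\<Sum>x<n. of_bool (E y x) * of_bool (E y' x))" unfolding W_def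
        by (rule sum_vanish_diff) (use C Cs_sub vanish y in auto)
      finally show "(\<Sum>x\<in>W. of_bool (E x y) * of_bool (E x y') :: real) = (\<Sum>x<n. of_bool (E y x) * of_bool (E y' x))" .
    qed
    also have "\<dots> = real c * (real k + (real c - 1) * Q^2)"
      using sum_C_pairs[OF subset_refl C] Cs_card[OF C] by simp
    finally show ?thesis .
  qed
  have i1: "(real n - real c) * (Q^2 + Q) = real c * real k" unfolding rn rc rk by (simp add: algebra_simps power2_eq_square power3_eq_cube)
  have i2: "(real n - real c) * (Q^2 + Q)^2 = real c * (real k + (real c - 1) * Q^2)" unfolding rn rc rk by (simp add: algebra_simps power2_eq_square power3_eq_cube)
  have xW: "x \<in> W" using x by (simp add: W_def)
  have e1: "(\<Sum>x\<in>W. a x) = real (card W) * (Q^2 + Q)" using s1 cW i1 by simp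
  have e2: "(\<Sum>x\<in>W. (a x)^2) = real (card W) * (Q^2 + Q)^2" using s2 cW i2 by simp
  have "a x = Q^2 + Q" by (rule var0[OF fW e1 e2 xW])
  then show ?thesis unfolding a_def .
qed

end

context cfg begin

lemma card_inter_lt: assumes C: "C \<in> Cs" and D: "D \<in> Cs" and ne: "C \<noteq> D"
  shows "card (C \<inter> D) < c"
proof -
  have fC: "finite C" "finite D" using C D Cs_finC by auto
  have le: "card (C \<inter> D) \<le> c" using Cs_card[OF C] fC by (metis card_mono inf_le1)
  have "card (C \<inter> D) \<noteq> c"
  proof
    assume h: "card (C \<inter> D) = c"
    then have "C \<inter> D = C" using card_subset_eq[OF fC(1), of "C \<inter> D"] Cs_card[OF C] by auto
    then have "C \<subseteq> D" by auto
    then have "C = D" using card_subset_eq[OF fC(2)] Cs_card[OF C] Cs_card[OF D] by auto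
    with ne show False by simp
  qed
  with le show ?thesis by simp
qed

lemma sum_bool_C: "C \<in> Cs \<Longrightarrow> (\<Sum>x<n. of_bool (x \<in> C) :: real) = real c"
proof -
  assume C: "C \<in> Cs"
  have "(\<Sum>x<n. of_bool (x \<in> C) :: real) = real (card ({..<n} \<inter> {x. x \<in> C}))" by simp
  also have "{..<n} \<inter> {x. x \<in> C} = C" using Cs_sub[OF C] by auto
  finally show ?thesis using Cs_card[OF C] by simp
qed

lemma D2: assumes C: "C \<in> Cs" and D: "D \<in> Cs" and ne: "C \<noteq> D"
  shows "real (card (C \<inter> D)) \<le> Q^2 + Q - 1"
proof -
  define S where "S = C \<inter> D"
  define t where "t = real (card S)"
  define W where "W = {..<n} - (C \<union> D)"
  define b where "b = (\<lambda>z. (\<Sum>y\<in>S. of_bool (E z y) :: real))"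
  have SC: "S \<subseteq> C" unfolding S_def by auto
  have fS: "finite S" using SC Cs_finC[OF C] finite_subset by blast
  have fW: "finite W" unfolding W_def by simp
  have tc: "t < real c" unfolding t_def S_def using card_inter_lt[OF C D ne] by simp
  have t0: "t \<ge> 0" unfolding t_def by simp
  have cUn: "card (C \<union> D) + card (C \<inter> D) = c + c"
    using card_Un_Int[OF Cs_finC[OF C] Cs_finC[OF D]] Cs_card[OF C] Cs_card[OF D] by simp
  have sub: "C \<union> D \<subseteq> {..<n}" using Cs_sub[OF C] Cs_sub[OF D] by auto
  have "card W = n - card (C \<union> D)" unfolding W_def
    using card_Diff_subset[OF _ sub] Cs_finC[OF C] Cs_finC[OF D] by simp
  moreover have "card (C \<union> D) \<le> n" using sub card_mono[of "{..<n}" "C \<union> D"] by simp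
  ultimately have cW: "real (card W) = real n - 2 * real c + t"
    using cUn unfolding t_def S_def by (simp add: of_nat_diff)
  have vanish: "\<And>y x. y \<in> S \<Longrightarrow> x \<in> C \<union> D \<Longrightarrow> of_bool (E y x) = (0::real)"
    using C D Cs_coc unfolding S_def by auto
  have s1: "(\<Sum>x\<in>W. b x) = t * real k"
  proof -
    have "(\<Sum>x\<in>W. b x) = (\<Sum>y\<in>S. \<Sum>x\<in>W. of_bool (E x y))" unfolding b_def by (rule sum.swap)
    also have "\<dots> = (\<Sum>y\<in>S. \<Sum>x<n. of_bool (E y x))"
    proof (rule sum.cong[OF refl])
      fix y assume y: "y \<in> S"
      have yC: "y \<in> C" using y SC by auto
      have "(\<Sum>x\<in>W. of_bool (E x y) :: real) = (\<Sum>x\<in>W. of_bool (E y x))"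
        by (intro sum.cong refl) (simp add: W_def symC[OF C yC])
      also have "\<dots> = (\<Sum>x<n. of_bool (E y x))" unfolding W_def
        by (rule sum_vanish_diff) (use sub vanish y in auto)
      finally show "(\<Sum>x\<in>W. of_bool (E x y) :: real) = (\<Sum>x<n. of_bool (E y x))" .
    qed
    also have "\<dots> = (\<Sum>y\<in>S. real k)"
    proof (rule sum.cong[OF refl])
      fix y assume "y \<in> S"
      then have "y < n" using SC Cs_sub[OF C] by auto
      then show "(\<Sum>x<n. of_bool (E y x)) = real k" using srg_deg[OF srg] by simp
    qed
    finally show ?thesis unfolding t_def by simp
  qed
  have s2: "(\<Sum>x\<in>W. (b x)^2) = t * (real k + (t - 1) * Q^2)"
  proof -
    have "(\<Sum>x\<in>W. (b x)^2) = (\<Sum>x\<in>W. \<Sum>y\<in>S. \<Sum>y'\<in>S. of_bool (E x y) * of_bool (E x y'))"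
      unfolding b_def by (simp add: power2_eq_square sum_product)
    also have "\<dots> = (\<Sum>y\<in>S. \<Sum>x\<in>W. \<Sum>y'\<in>S. of_bool (E x y) * of_bool (E x y'))"
      by (rule sum.swap)
    also have "\<dots> = (\<Sum>y\<in>S. \<Sum>y'\<in>S. \<Sum>x\<in>W. of_bool (E x y) * of_bool (E x y'))"
      by (rule sum.cong[OF refl], rule sum.swap)
    also have "\<dots> = (\<Sum>y\<in>S. \<Sum>y'\<in>S. \<Sum>x<n. of_bool (E y x) * of_bool (E y' x))"
    proof (rule sum.cong[OF refl], rule sum.cong[OF refl])
      fix y y' assume y: "y \<in> S" and y': "y' \<in> S"
      have yC: "y \<in> C" "y' \<in> C" using y y' SC by auto
      have "(\<Sum>x\<in>W. of_bool (E x y) * of_bool (E x y') :: real) = (\<Sum>x\<in>W. of_bool (E y x) * of_bool (E y' x))"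
        by (intro sum.cong refl) (simp add: W_def symC[OF C yC(1)] symC[OF C yC(2)])
      also have "\<dots> = (\<Sum>x<n. of_bool (E y x) * of_bool (E y' x))" unfolding W_def
        by (rule sum_vanish_diff) (use sub vanish y in auto)
      finally show "(\<Sum>x\<in>W. of_bool (E x y) * of_bool (E x y') :: real) = (\<Sum>x<n. of_bool (E y x) * of_bool (E y' x))" .
    qed
    also have "\<dots> = t * (real k + (t - 1) * Q^2)"
      using sum_C_pairs[OF SC C] unfolding t_def by simp
    finally show ?thesis .
  qed
  have "(t * real k)^2 \<le> (real n - 2 * real c + t) * (t * (real k + (t - 1) * Q^2))"
    using cs_ineq[OF fW, of b] s1 s2 cW by simp
  moreover have iden: "(real n - 2 * real c + t) * (real k + (t - 1) * Q^2) - t * (real k)^2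
      = Q^2 * (t - (Q^2+Q-1)) * (t - real c)"
    unfolding rn rc rk by (simp add: algebra_simps power2_eq_square power3_eq_cube)
  moreover have "t * ((real n - 2 * real c + t) * (real k + (t - 1) * Q^2) - t * (real k)^2)
     = (real n - 2 * real c + t) * (t * (real k + (t - 1) * Q^2)) - (t * real k)^2"
    by (simp add: algebra_simps power2_eq_square power3_eq_cube)
  ultimately have key: "t * (Q^2 * (t - (Q^2+Q-1)) * (t - real c)) \<ge> 0"
    by (metis diff_ge_0_iff_ge)
  show ?thesis
  proof (cases "t = 0")
    case True
    then show ?thesis using Qpos unfolding t_def S_def by (simp add: power2_eq_square) (smt (verit) mult_ge1_I Qpos)
  next
    case False
    then have tp: "t > 0" using t0 by simp
    have "Q^2 * (t - (Q^2+Q-1)) * (t - real c) \<ge> 0"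
      using key tp by (simp add: zero_le_mult_iff)
    moreover have "Q^2 > 0" using Qpos by simp
    ultimately have "(t - (Q^2+Q-1)) * (t - real c) \<ge> 0"
      by (simp add: zero_le_mult_iff mult.assoc)
    then have "t - (Q^2+Q-1) \<le> 0" using tc by (simp add: zero_le_mult_iff)
    then show ?thesis unfolding t_def S_def by simp
  qed
qed


definition rr :: "nat \<Rightarrow> real" where "rr x = (\<Sum>C\<in>Cs. of_bool (x \<in> C))"

lemma card_Cs_minus: "C \<in> Cs \<Longrightarrow> real (card (Cs - {C})) = real c"
  using cardCs Cs_fin by simp

lemma iden_nrho: "(real c + 1) * real c = real n * (Q^2 + Q)" unfolding rn rc by (simp add: algebra_simps power2_eq_square power3_eq_cube)

lemma D3: "(\<forall>x<n. rr x = Q^2 + Q) \<and> (\<forall>C\<in>Cs. \<forall>D\<in>Cs. C \<noteq> D \<longrightarrow> real (card (C \<inter> D)) = Q^2 + Q - 1)"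
proof -
  define T where "T = (\<lambda>C. (\<Sum>D\<in>Cs - {C}. real (card (C \<inter> D))))"
  define t0 where "t0 = Q^2 + Q - 1"
  define \<rho> where "\<rho> = Q^2 + Q"
  have fCs: "finite Cs" by (rule Cs_fin)
  have sr: "(\<Sum>x<n. rr x) = (real c + 1) * real c"
  proof -
    have "(\<Sum>x<n. rr x) = (\<Sum>C\<in>Cs. \<Sum>x<n. of_bool (x \<in> C))" unfolding rr_def by (rule sum.swap)
    also have "\<dots> = (\<Sum>C\<in>Cs. real c)" by (rule sum.cong[OF refl]) (rule sum_bool_C)
    finally show ?thesis using cardCs by (simp add: algebra_simps)
  qed
  have inter: "\<And>C D. C \<in> Cs \<Longrightarrow> D \<in> Cs \<Longrightarrow> (\<Sum>x<n. of_bool (x \<in> C) * of_bool (x \<in> D) :: real) = real (card (C \<inter> D))"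
  proof -
    fix C D assume C: "C \<in> Cs" and D: "D \<in> Cs"
    have "(\<Sum>x<n. of_bool (x \<in> C) * of_bool (x \<in> D) :: real) = (\<Sum>x<n. of_bool (x \<in> C \<inter> D))"
      by (intro sum.cong refl) auto
    also have "\<dots> = real (card ({..<n} \<inter> {x. x \<in> C \<inter> D}))" by simp
    also have "{..<n} \<inter> {x. x \<in> C \<inter> D} = C \<inter> D" using Cs_sub[OF C] by auto
    finally show "(\<Sum>x<n. of_bool (x \<in> C) * of_bool (x \<in> D) :: real) = real (card (C \<inter> D))" .
  qed
  have sr2: "(\<Sum>x<n. (rr x)^2) = (\<Sum>C\<in>Cs. real c + T C)"
  proof -
    have "(\<Sum>x<n. (rr x)^2) = (\<Sum>x<n. \<Sum>C\<in>Cs. \<Sum>D\<in>Cs. of_bool (x \<in> C) * of_bool (x \<in> D))"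
      unfolding rr_def by (simp add: power2_eq_square sum_product)
    also have "\<dots> = (\<Sum>C\<in>Cs. \<Sum>x<n. \<Sum>D\<in>Cs. of_bool (x \<in> C) * of_bool (x \<in> D))" by (rule sum.swap)
    also have "\<dots> = (\<Sum>C\<in>Cs. \<Sum>D\<in>Cs. \<Sum>x<n. of_bool (x \<in> C) * of_bool (x \<in> D))"
      by (rule sum.cong[OF refl], rule sum.swap)
    also have "\<dots> = (\<Sum>C\<in>Cs. \<Sum>D\<in>Cs. real (card (C \<inter> D)))"
      by (rule sum.cong[OF refl], rule sum.cong[OF refl]) (rule inter)
    also have "\<dots> = (\<Sum>C\<in>Cs. real c + T C)"
    proof (rule sum.cong[OF refl])
      fix C assume C: "C \<in> Cs"
      have "(\<Sum>D\<in>Cs. real (card (C \<inter> D))) = real (card (C \<inter> C)) + T C"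
        unfolding T_def by (rule sum.remove[OF fCs C])
      then show "(\<Sum>D\<in>Cs. real (card (C \<inter> D))) = real c + T C" using Cs_card[OF C] by simp
    qed
    finally show ?thesis .
  qed
  have Tle: "\<And>C. C \<in> Cs \<Longrightarrow> T C \<le> real c * t0"
  proof -
    fix C assume C: "C \<in> Cs"
    have "T C \<le> (\<Sum>D\<in>Cs - {C}. t0)" unfolding T_def t0_def
      by (rule sum_mono) (use D2 C in auto)
    then show "T C \<le> real c * t0" using card_Cs_minus[OF C] by simp
  qed
  have sumT: "(\<Sum>C\<in>Cs. real c + T C) \<le> (real c + 1) * (real c + real c * t0)"
  proof -
    have "(\<Sum>C\<in>Cs. real c + T C) \<le> (\<Sum>C\<in>Cs. real c + real c * t0)"
      by (rule sum_mono) (use Tle in auto)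
    then show ?thesis using cardCs by (simp add: algebra_simps)
  qed
  have iden: "(real c + 1) * (real c + real c * t0) - 2 * \<rho> * ((real c + 1) * real c) + real n * \<rho>^2 = 0"
    unfolding t0_def \<rho>_def rn rc by (simp add: algebra_simps power2_eq_square power3_eq_cube)
  have "(\<Sum>x<n. (rr x - \<rho>)^2) = (\<Sum>x<n. (rr x)^2) - 2*\<rho>*(\<Sum>x<n. rr x) + real n * \<rho>^2"
    using sq_expand[of "{..<n}" rr \<rho>] by simp
  also have "\<dots> \<le> 0" unfolding sr sr2 using sumT iden by linarith
  finally have le0: "(\<Sum>x<n. (rr x - \<rho>)^2) \<le> 0" .
  have ge0: "(\<Sum>x<n. (rr x - \<rho>)^2) \<ge> 0" by (intro sum_nonneg) simp
  then have "(\<Sum>x<n. (rr x - \<rho>)^2) = 0" using le0 by linarith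
  then have "\<forall>x\<in>{..<n}. (rr x - \<rho>)^2 = 0"
    using sum_nonneg_eq_0_iff[of "{..<n}" "\<lambda>x. (rr x - \<rho>)^2"] by simp
  then have part1: "\<forall>x<n. rr x = Q^2 + Q" unfolding \<rho>_def by simp
  have "(\<Sum>x<n. (rr x)^2) = (\<Sum>x<n. \<rho>^2)" by (intro sum.cong refl) (use part1 \<rho>_def in auto)
  then have "(\<Sum>C\<in>Cs. real c + T C) = real n * \<rho>^2" using sr2 by simp
  also have "\<dots> = (real c + 1) * (real c + real c * t0)" unfolding t0_def \<rho>_def rn rc by (simp add: algebra_simps power2_eq_square power3_eq_cube)
  also have "\<dots> = (\<Sum>C\<in>Cs. real c + real c * t0)" using cardCs by simp
  finally have eqs: "(\<Sum>C\<in>Cs. real c + T C) = (\<Sum>C\<in>Cs. real c + real c * t0)" .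
  have "(\<Sum>C\<in>Cs. (real c + real c * t0) - (real c + T C)) = 0" by (simp only: sum_subtractf eqs diff_self)
  then have "\<forall>C\<in>Cs. (real c + real c * t0) - (real c + T C) = 0"
    using sum_nonneg_eq_0_iff[OF fCs, of "\<lambda>C. (real c + real c * t0) - (real c + T C)"] Tle by simp
  then have TC: "\<And>C. C \<in> Cs \<Longrightarrow> T C = real c * t0" by simp
  have part2: "\<forall>C\<in>Cs. \<forall>D\<in>Cs. C \<noteq> D \<longrightarrow> real (card (C \<inter> D)) = t0"
  proof (intro ballI impI)
    fix C D assume C: "C \<in> Cs" and D: "D \<in> Cs" and ne: "C \<noteq> D"
    have f2: "finite (Cs - {C})" using fCs by simp
    have "(\<Sum>D\<in>Cs - {C}. t0 - real (card (C \<inter> D))) = real c * t0 - T C"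
      unfolding T_def using card_Cs_minus[OF C] by (simp add: sum_subtractf)
    also have "\<dots> = 0" using TC[OF C] by simp
    finally have "\<forall>D\<in>Cs - {C}. t0 - real (card (C \<inter> D)) = 0"
      using sum_nonneg_eq_0_iff[OF f2, of "\<lambda>D. t0 - real (card (C \<inter> D))"] D2 C unfolding t0_def by auto
    then show "real (card (C \<inter> D)) = t0" using D ne by auto
  qed
  show ?thesis using part1 part2 unfolding t0_def by blast
qed

lemma rr_val: "x < n \<Longrightarrow> rr x = Q^2 + Q" using D3 by blast
lemma inter_val: "C \<in> Cs \<Longrightarrow> D \<in> Cs \<Longrightarrow> C \<noteq> D \<Longrightarrow> real (card (C \<inter> D)) = Q^2 + Q - 1" using D3 by blast


lemma D4: assumes x: "x < n" and y: "y < n" and ne: "x \<noteq> y" and nadj: "\<not> E x y"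
  shows "(\<Sum>C\<in>Cs. of_bool (x \<in> C \<and> y \<in> C) :: real) = Q"
proof -
  define W where "W = {z. z < n \<and> z \<noteq> x \<and> \<not> E x z}"
  define p where "p = (\<lambda>z. (\<Sum>C\<in>Cs. of_bool (x \<in> C) * of_bool (z \<in> C) :: real))"
  define \<rho> where "\<rho> = Q^2 + Q"
  define t0 where "t0 = Q^2 + Q - 1"
  have fCs: "finite Cs" by (rule Cs_fin)
  have fW: "finite W" unfolding W_def by simp
  have yW: "y \<in> W" unfolding W_def using y ne nadj by simp
  define N where "N = {z. z < n \<and> E x z}"
  have cN: "card N = k" unfolding N_def using srg x unfolding strongly_regular_def by blast
  have xN: "x \<notin> N" unfolding N_def using irr[OF x] by simp
  have fN: "finite N" unfolding N_def by simp
  have Wd: "W = {..<n} - insert x N" unfolding W_def N_def by auto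
  have subN: "insert x N \<subseteq> {..<n}" unfolding N_def using x by auto
  have ci: "card (insert x N) = Suc k" using cN xN fN by simp
  have "card W = n - Suc k" unfolding Wd using card_Diff_subset[OF _ subN] fN ci by simp
  moreover have "Suc k \<le> n" using card_mono[OF _ subN] ci by simp
  ultimately have cW: "real (card W) = real n - 1 - real k" by (simp add: of_nat_diff)
  have one: "\<And>C. C \<in> Cs \<Longrightarrow> x \<in> C \<Longrightarrow> (\<Sum>z\<in>W. of_bool (z \<in> C) :: real) = real c - 1"
  proof -
    fix C assume C: "C \<in> Cs" and xC: "x \<in> C"
    have "(\<Sum>z\<in>W. of_bool (z \<in> C) :: real) = real (card (W \<inter> {z. z \<in> C}))" using fW by simp
    also have "W \<inter> {z. z \<in> C} = C - {x}" unfolding W_def using Cs_sub[OF C] Cs_coc[OF C xC] by auto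
    also have "real (card (C - {x})) = real c - 1"
    proof -
      have "card C > 0" using xC Cs_finC[OF C] card_gt_0_iff by blast
      then show ?thesis using xC Cs_card[OF C] Cs_finC[OF C] by (simp add: of_nat_diff)
    qed
    finally show "(\<Sum>z\<in>W. of_bool (z \<in> C) :: real) = real c - 1" .
  qed
  have two: "\<And>C D. C \<in> Cs \<Longrightarrow> D \<in> Cs \<Longrightarrow> x \<in> C \<Longrightarrow> x \<in> D \<Longrightarrow>
      (\<Sum>z\<in>W. of_bool (z \<in> C) * of_bool (z \<in> D) :: real) = real (card (C \<inter> D)) - 1"
  proof -
    fix C D assume C: "C \<in> Cs" and D: "D \<in> Cs" and xC: "x \<in> C" and xD: "x \<in> D"
    have "(\<Sum>z\<in>W. of_bool (z \<in> C) * of_bool (z \<in> D) :: real) = (\<Sum>z\<in>W. of_bool (z \<in> C \<inter> D))"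
      by (intro sum.cong refl) auto
    also have "\<dots> = real (card (W \<inter> {z. z \<in> C \<inter> D}))" using fW by simp
    also have "W \<inter> {z. z \<in> C \<inter> D} = (C \<inter> D) - {x}" unfolding W_def using Cs_sub[OF C] Cs_coc[OF C xC] by auto
    also have "real (card ((C \<inter> D) - {x})) = real (card (C \<inter> D)) - 1"
    proof -
      have f: "finite (C \<inter> D)" using Cs_finC[OF C] by simp
      have "x \<in> C \<inter> D" using xC xD by simp
      then have "card (C \<inter> D) > 0" using f card_gt_0_iff by blast
      then have "card (C \<inter> D) \<ge> 1" by simp
      then show ?thesis using \<open>x \<in> C \<inter> D\<close> f by (simp add: of_nat_diff)
    qed
    finally show "(\<Sum>z\<in>W. of_bool (z \<in> C) * of_bool (z \<in> D) :: real) = real (card (C \<inter> D)) - 1" .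
  qed
  have rx: "rr x = \<rho>" using rr_val[OF x] unfolding \<rho>_def .
  have s1: "(\<Sum>z\<in>W. p z) = \<rho> * (real c - 1)"
  proof -
    have "(\<Sum>z\<in>W. p z) = (\<Sum>C\<in>Cs. \<Sum>z\<in>W. of_bool (x \<in> C) * of_bool (z \<in> C))" unfolding p_def by (rule sum.swap)
    also have "\<dots> = (\<Sum>C\<in>Cs. of_bool (x \<in> C) * (real c - 1))"
    proof (rule sum.cong[OF refl])
      fix C assume C: "C \<in> Cs"
      show "(\<Sum>z\<in>W. of_bool (x \<in> C) * of_bool (z \<in> C)) = of_bool (x \<in> C) * (real c - 1)"
      proof (cases "x \<in> C")
        case True then show ?thesis using one[OF C True] by simp
      qed simp
    qed
    also have "\<dots> = rr x * (real c - 1)" unfolding rr_def by (simp add: sum_distrib_right)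
    finally show ?thesis using rx by simp
  qed
  have s2: "(\<Sum>z\<in>W. (p z)^2) = \<rho> * ((real c - 1) + (t0 - 1) * (\<rho> - 1))"
  proof -
    have "(\<Sum>z\<in>W. (p z)^2) = (\<Sum>z\<in>W. \<Sum>C\<in>Cs. \<Sum>D\<in>Cs. (of_bool (x \<in> C) * of_bool (z \<in> C)) * (of_bool (x \<in> D) * of_bool (z \<in> D)))"
      unfolding p_def by (simp add: power2_eq_square sum_product)
    also have "\<dots> = (\<Sum>C\<in>Cs. \<Sum>z\<in>W. \<Sum>D\<in>Cs. (of_bool (x \<in> C) * of_bool (z \<in> C)) * (of_bool (x \<in> D) * of_bool (z \<in> D)))"
      by (rule sum.swap)
    also have "\<dots> = (\<Sum>C\<in>Cs. \<Sum>D\<in>Cs. \<Sum>z\<in>W. (of_bool (x \<in> C) * of_bool (z \<in> C)) * (of_bool (x \<in> D) * of_bool (z \<in> D)))"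
      by (rule sum.cong[OF refl], rule sum.swap)
    also have "\<dots> = (\<Sum>C\<in>Cs. of_bool (x \<in> C) * ((real c - 1) + (t0 - 1) * (\<rho> - 1)))"
    proof (rule sum.cong[OF refl])
      fix C assume C: "C \<in> Cs"
      show "(\<Sum>D\<in>Cs. \<Sum>z\<in>W. (of_bool (x \<in> C) * of_bool (z \<in> C)) * (of_bool (x \<in> D) * of_bool (z \<in> D)))
          = of_bool (x \<in> C) * ((real c - 1) + (t0 - 1) * (\<rho> - 1))"
      proof (cases "x \<in> C")
        case False then show ?thesis by simp
      next
        case xC: True
        have inner: "\<And>D. D \<in> Cs \<Longrightarrow> (\<Sum>z\<in>W. (of_bool (x \<in> C) * of_bool (z \<in> C)) * (of_bool (x \<in> D) * of_bool (z \<in> D)))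
             = of_bool (x \<in> D) * (real (card (C \<inter> D)) - 1)"
        proof -
          fix D assume D: "D \<in> Cs"
          show "(\<Sum>z\<in>W. (of_bool (x \<in> C) * of_bool (z \<in> C)) * (of_bool (x \<in> D) * of_bool (z \<in> D)))
             = of_bool (x \<in> D) * (real (card (C \<inter> D)) - 1)"
          proof (cases "x \<in> D")
            case True
            have "(\<Sum>z\<in>W. (of_bool (x \<in> C) * of_bool (z \<in> C)) * (of_bool (x \<in> D) * of_bool (z \<in> D)) :: real)
               = (\<Sum>z\<in>W. of_bool (z \<in> C) * of_bool (z \<in> D))" using xC True by simp
            then show ?thesis using two[OF C D xC True] True by simp
          qed simp
        qed
        have "(\<Sum>D\<in>Cs. \<Sum>z\<in>W. (of_bool (x \<in> C) * of_bool (z \<in> C)) * (of_bool (x \<in> D) * of_bool (z \<in> D)))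
            = (\<Sum>D\<in>Cs. of_bool (x \<in> D) * (real (card (C \<inter> D)) - 1))"
          by (rule sum.cong[OF refl]) (rule inner)
        also have "\<dots> = of_bool (x \<in> C) * (real (card (C \<inter> C)) - 1) + (\<Sum>D\<in>Cs - {C}. of_bool (x \<in> D) * (real (card (C \<inter> D)) - 1))"
          by (rule sum.remove[OF fCs C])
        also have "(\<Sum>D\<in>Cs - {C}. of_bool (x \<in> D) * (real (card (C \<inter> D)) - 1)) = (\<Sum>D\<in>Cs - {C}. of_bool (x \<in> D) * (t0 - 1))"
        proof (rule sum.cong[OF refl])
          fix D assume "D \<in> Cs - {C}"
          then have "D \<in> Cs" "C \<noteq> D" by auto
          then show "of_bool (x \<in> D) * (real (card (C \<inter> D)) - 1) = of_bool (x \<in> D) * (t0 - 1)"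
            using inter_val[OF C, of D] t0_def by simp
        qed
        also have "\<dots> = (\<Sum>D\<in>Cs - {C}. of_bool (x \<in> D)) * (t0 - 1)" by (simp add: sum_distrib_right)
        also have "(\<Sum>D\<in>Cs - {C}. of_bool (x \<in> D) :: real) = rr x - 1"
        proof -
          have "rr x = of_bool (x \<in> C) + (\<Sum>D\<in>Cs - {C}. of_bool (x \<in> D))" unfolding rr_def by (rule sum.remove[OF fCs C])
          then show ?thesis using xC by simp
        qed
        finally show ?thesis using xC rx Cs_card[OF C] by simp
      qed
    qed
    also have "\<dots> = rr x * ((real c - 1) + (t0 - 1) * (\<rho> - 1))" unfolding rr_def by (simp add: sum_distrib_right)
    finally show ?thesis using rx by simp
  qed
  have i1: "(real n - 1 - real k) * Q = \<rho> * (real c - 1)" unfolding \<rho>_def rn rc rk by (simp add: algebra_simps power2_eq_square power3_eq_cube)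
  have i2: "(real n - 1 - real k) * Q^2 = \<rho> * ((real c - 1) + (t0 - 1) * (\<rho> - 1))"
    unfolding \<rho>_def t0_def rn rc rk by (simp add: algebra_simps power2_eq_square power3_eq_cube)
  have e1: "(\<Sum>z\<in>W. p z) = real (card W) * Q" using s1 cW i1 by simp
  have e2: "(\<Sum>z\<in>W. (p z)^2) = real (card W) * Q^2" using s2 cW i2 by simp
  have "p y = Q" by (rule var0[OF fW e1 e2 yW])
  moreover have "p y = (\<Sum>C\<in>Cs. of_bool (x \<in> C \<and> y \<in> C))" unfolding p_def by (intro sum.cong refl) auto
  ultimately show ?thesis by simp
qed

end


lemma sum_lessThan_add: "(\<Sum>z<a+b. g z) = (\<Sum>z<a. g z) + (\<Sum>i<b. g (a+i))" for g :: "nat \<Rightarrow> real"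
  by (induction b) (simp_all add: add.assoc)

locale cfg2 = cfg +
  fixes \<phi> :: "nat \<Rightarrow> nat set"
  assumes phi: "bij_betw \<phi> {..<c+1} Cs"
begin

definition "NN = n + c + 2"
definition E2 :: "nat \<Rightarrow> nat \<Rightarrow> bool" where
  "E2 i j \<longleftrightarrow> (i < n \<and> j < n \<and> E i j) \<or> (i < n \<and> n \<le> j \<and> j < n + c + 1 \<and> i \<in> \<phi> (j - n))
     \<or> (j < n \<and> n \<le> i \<and> i < n + c + 1 \<and> j \<in> \<phi> (i - n))
     \<or> (i = n + c + 1 \<and> n \<le> j \<and> j < n + c + 1) \<or> (j = n + c + 1 \<and> n \<le> i \<and> i < n + c + 1)"

lemma phi_in: "i < c + 1 \<Longrightarrow> \<phi> i \<in> Cs" using phi unfolding bij_betw_def by auto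
lemma phi_inj: "i < c + 1 \<Longrightarrow> j < c + 1 \<Longrightarrow> i \<noteq> j \<Longrightarrow> \<phi> i \<noteq> \<phi> j"
  using phi unfolding bij_betw_def inj_on_def by auto
lemma reidx: "(\<Sum>i<c+1. h (\<phi> i)) = (\<Sum>C\<in>Cs. h C)" for h :: "nat set \<Rightarrow> real"
  by (rule sum.reindex_bij_betw[OF phi])
lemma phi_lt: "i < c + 1 \<Longrightarrow> x \<in> \<phi> i \<Longrightarrow> x < n" using Cs_sub[OF phi_in] by auto

lemma E2_VV: "i < n \<Longrightarrow> j < n \<Longrightarrow> E2 i j = E i j" unfolding E2_def by auto
lemma E2_VB: "i < n \<Longrightarrow> j < c + 1 \<Longrightarrow> E2 i (n+j) = (i \<in> \<phi> j)" unfolding E2_def using phi_lt by auto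
lemma E2_BV: "i < n \<Longrightarrow> j < c + 1 \<Longrightarrow> E2 (n+j) i = (i \<in> \<phi> j)" unfolding E2_def using phi_lt by auto
lemma E2_BB: "i < c + 1 \<Longrightarrow> j < c + 1 \<Longrightarrow> \<not> E2 (n+i) (n+j)" unfolding E2_def by auto
lemma E2_Vi: "i < n \<Longrightarrow> \<not> E2 i (n+c+1)" "i < n \<Longrightarrow> \<not> E2 (n+c+1) i" unfolding E2_def by auto
lemma E2_Bi: "j < c + 1 \<Longrightarrow> E2 (n+j) (n+c+1)" "j < c + 1 \<Longrightarrow> E2 (n+c+1) (n+j)" unfolding E2_def by auto
lemma E2_ii: "\<not> E2 (n+c+1) (n+c+1)" unfolding E2_def by auto
lemma E2_Vi': "i < n \<Longrightarrow> \<not> E2 i (Suc (n+c))" "i < n \<Longrightarrow> \<not> E2 (Suc (n+c)) i" using E2_Vi by auto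
lemma E2_Bi': "j < c + 1 \<Longrightarrow> E2 (n+j) (Suc (n+c))" "j < c + 1 \<Longrightarrow> E2 (Suc (n+c)) (n+j)" using E2_Bi by auto
lemma E2_le: "j \<le> c \<Longrightarrow> i < n \<Longrightarrow> E2 i (n+j) = (i \<in> \<phi> j)"
  "j \<le> c \<Longrightarrow> i < n \<Longrightarrow> E2 (n+j) i = (i \<in> \<phi> j)"
  "i \<le> c \<Longrightarrow> j \<le> c \<Longrightarrow> \<not> E2 (n+i) (n+j)"
  "j \<le> c \<Longrightarrow> E2 (n+j) (Suc (n+c))" "j \<le> c \<Longrightarrow> E2 (Suc (n+c)) (n+j)"
  using E2_VB E2_BV E2_BB E2_Bi by auto
lemma E2_ii': "\<not> E2 (Suc (n+c)) (Suc (n+c))" using E2_ii by auto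

lemma E2_sym: "x < NN \<Longrightarrow> y < NN \<Longrightarrow> E2 x y = E2 y x"
  unfolding E2_def NN_def using sym by auto
lemma E2_irr: "x < NN \<Longrightarrow> \<not> E2 x x"
  unfolding E2_def NN_def using irr by auto

lemma split: "(\<Sum>z<NN. g z) = (\<Sum>z<n. g z) + (\<Sum>i<c+1. g (n+i)) + g (n+c+1)" for g :: "nat \<Rightarrow> real"
proof -
  have "NN = Suc (n + (c+1))" unfolding NN_def by simp
  then show ?thesis by (simp add: sum_lessThan_add add.assoc)
qed

lemma types: assumes "x < NN"
  obtains "x < n" | j where "j < c + 1" "x = n + j" | "x = n + c + 1"
proof -
  consider "x < n" | "n \<le> x \<and> x < n + c + 1" | "x = n + c + 1" using assms unfolding NN_def by linarith
  then show ?thesis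
  proof cases
    case 2 then show ?thesis using that(2)[of "x - n"] by auto
  qed (use that in auto)
qed

lemma sum_phi_bool: "j < c + 1 \<Longrightarrow> (\<Sum>z<n. of_bool (z \<in> \<phi> j) :: real) = real c"
  using sum_bool_C[OF phi_in] .

lemma deg2: assumes x: "x < NN" shows "(\<Sum>z<NN. of_bool (E2 x z) :: real) = real c + 1"
  using x
proof (cases rule: types)
  case 1
  have a: "(\<Sum>z<n. of_bool (E2 x z) :: real) = real k"
    using srg_deg[OF srg 1] by (simp add: E2_VV 1)
  have b: "(\<Sum>i<c+1. of_bool (E2 x (n+i)) :: real) = Q^2 + Q"
  proof -
    have "(\<Sum>i<c+1. of_bool (E2 x (n+i)) :: real) = (\<Sum>i<c+1. of_bool (x \<in> \<phi> i))"
      by (rule sum.cong[OF refl]) (simp add: E2_VB 1)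
    also have "\<dots> = rr x" unfolding rr_def by (rule reidx)
    finally show ?thesis using rr_val[OF 1] by simp
  qed
  have "real k + (Q^2 + Q) = real c + 1" unfolding rk rc by (simp add: algebra_simps power2_eq_square power3_eq_cube)
  then show ?thesis unfolding split a b using E2_Vi[OF 1] by simp
next
  case (2 j)
  have a: "(\<Sum>z<n. of_bool (E2 x z) :: real) = real c"
  proof -
    have "(\<Sum>z<n. of_bool (E2 x z) :: real) = (\<Sum>z<n. of_bool (z \<in> \<phi> j))"
      by (rule sum.cong[OF refl]) (use E2_BV 2 in auto)
    then show ?thesis using sum_phi_bool[OF 2(1)] by simp
  qed
  have b: "(\<Sum>i<c+1. of_bool (E2 x (n+i)) :: real) = 0"
    by (rule sum.neutral) (use E2_le 2 in auto)
  show ?thesis unfolding split a b using 2 E2_Bi by simp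
next
  case 3
  have a: "(\<Sum>z<n. of_bool (E2 x z) :: real) = 0" by (rule sum.neutral) (use E2_Vi' 3 in auto)
  have b: "(\<Sum>i<c+1. of_bool (E2 x (n+i)) :: real) = (\<Sum>i<c+1. 1)"
    by (rule sum.cong[OF refl]) (use E2_le 3 in auto)
  show ?thesis unfolding split a b using 3 E2_ii by simp
qed

definition cn2 :: "nat \<Rightarrow> nat \<Rightarrow> real" where
  "cn2 x y = (\<Sum>z<NN. of_bool (E2 x z) * of_bool (E2 y z))"

lemma cn2_sym: "cn2 x y = cn2 y x" unfolding cn2_def by (simp add: mult.commute)

lemma sum_inC: "C \<in> Cs \<Longrightarrow> (\<Sum>z<n. f z * of_bool (z \<in> C) :: real) = (\<Sum>z\<in>C. f z)"
proof -
  assume C: "C \<in> Cs"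
  have "(\<Sum>z<n. f z * of_bool (z \<in> C) :: real) = (\<Sum>z\<in>{..<n} \<inter> {z. z \<in> C}. f z)"
    by (rule sum_mult_of_bool_eq) simp
  also have "{..<n} \<inter> {z. z \<in> C} = C" using Cs_sub[OF C] by auto
  finally show ?thesis .
qed

lemma cn_VV: assumes x: "x < n" and y: "y < n" and ne: "x \<noteq> y"
  shows "cn2 x y = (if E2 x y then 0 else Q^2 + Q)"
proof -
  have a: "(\<Sum>z<n. of_bool (E2 x z) * of_bool (E2 y z) :: real) = (if E x y then 0 else Q^2)"
  proof -
    have "(\<Sum>z<n. of_bool (E2 x z) * of_bool (E2 y z) :: real) = (\<Sum>z<n. of_bool (E x z) * of_bool (E y z))"
      by (rule sum.cong[OF refl]) (simp add: E2_VV x y)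
    then show ?thesis using srg_cn[OF srg x y] ne by simp
  qed
  have b: "(\<Sum>i<c+1. of_bool (E2 x (n+i)) * of_bool (E2 y (n+i)) :: real) = (if E x y then 0 else Q)"
  proof -
    have "(\<Sum>i<c+1. of_bool (E2 x (n+i)) * of_bool (E2 y (n+i)) :: real) = (\<Sum>i<c+1. of_bool (x \<in> \<phi> i \<and> y \<in> \<phi> i))"
      by (rule sum.cong[OF refl]) (simp add: E2_VB x y)
    also have "\<dots> = (\<Sum>C\<in>Cs. of_bool (x \<in> C \<and> y \<in> C))" by (rule reidx)
    also have "\<dots> = (if E x y then 0 else Q)"
    proof (cases "E x y")
      case True
      have "(\<Sum>C\<in>Cs. of_bool (x \<in> C \<and> y \<in> C) :: real) = (\<Sum>C\<in>Cs. 0)"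
        by (rule sum.cong[OF refl]) (use Cs_coc True in auto)
      then show ?thesis using True by simp
    next
      case False
      then show ?thesis using D4[OF x y ne False] by simp
    qed
    finally show ?thesis .
  qed
  show ?thesis unfolding cn2_def split a b using E2_Vi[OF x] E2_Vi[OF y] by (simp add: E2_VV x y)
qed

lemma cn_VB: assumes x: "x < n" and j: "j < c + 1"
  shows "cn2 x (n+j) = (if E2 x (n+j) then 0 else Q^2 + Q)"
proof -
  have C: "\<phi> j \<in> Cs" by (rule phi_in[OF j])
  have a: "(\<Sum>z<n. of_bool (E2 x z) * of_bool (E2 (n+j) z) :: real) = (if x \<in> \<phi> j then 0 else Q^2 + Q)"
  proof -
    have "(\<Sum>z<n. of_bool (E2 x z) * of_bool (E2 (n+j) z) :: real) = (\<Sum>z<n. of_bool (E x z) * of_bool (z \<in> \<phi> j))"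
      by (rule sum.cong[OF refl]) (use E2_VV E2_BV x j in auto)
    also have "\<dots> = (\<Sum>z\<in>\<phi> j. of_bool (E x z))" by (rule sum_inC[OF C])
    also have "\<dots> = (if x \<in> \<phi> j then 0 else Q^2 + Q)"
    proof (cases "x \<in> \<phi> j")
      case True
      have "(\<Sum>z\<in>\<phi> j. of_bool (E x z) :: real) = (\<Sum>z\<in>\<phi> j. 0)"
        by (rule sum.cong[OF refl]) (use Cs_coc[OF C True] in auto)
      then show ?thesis using True by simp
    next
      case False
      then show ?thesis using D1[OF C x False] by simp
    qed
    finally show ?thesis .
  qed
  have b: "(\<Sum>i<c+1. of_bool (E2 x (n+i)) * of_bool (E2 (n+j) (n+i)) :: real) = 0"
    by (rule sum.neutral) (use E2_le j in auto)
  show ?thesis unfolding cn2_def split a b using E2_Vi[OF x] E2_Bi[OF j] E2_VB[OF x j] by simp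
qed

lemma cn_Vi: assumes x: "x < n"
  shows "cn2 x (n+c+1) = (if E2 x (n+c+1) then 0 else Q^2 + Q)"
proof -
  have a: "(\<Sum>z<n. of_bool (E2 x z) * of_bool (E2 (n+c+1) z) :: real) = 0" by (rule sum.neutral) (use E2_Vi' in auto)
  have b: "(\<Sum>i<c+1. of_bool (E2 x (n+i)) * of_bool (E2 (n+c+1) (n+i)) :: real) = Q^2 + Q"
  proof -
    have "(\<Sum>i<c+1. of_bool (E2 x (n+i)) * of_bool (E2 (n+c+1) (n+i)) :: real) = (\<Sum>i<c+1. of_bool (x \<in> \<phi> i))"
      by (rule sum.cong[OF refl]) (use E2_le x in auto)
    also have "\<dots> = rr x" unfolding rr_def by (rule reidx)
    finally show ?thesis using rr_val[OF x] by simp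
  qed
  show ?thesis unfolding cn2_def split a b using E2_Vi[OF x] by simp
qed

lemma cn_BB: assumes i: "i < c + 1" and j: "j < c + 1" and ne: "i \<noteq> j"
  shows "cn2 (n+i) (n+j) = (if E2 (n+i) (n+j) then 0 else Q^2 + Q)"
proof -
  have a: "(\<Sum>z<n. of_bool (E2 (n+i) z) * of_bool (E2 (n+j) z) :: real) = Q^2 + Q - 1"
  proof -
    have "(\<Sum>z<n. of_bool (E2 (n+i) z) * of_bool (E2 (n+j) z) :: real) = (\<Sum>z<n. of_bool (z \<in> \<phi> i) * of_bool (z \<in> \<phi> j))"
      by (rule sum.cong[OF refl]) (use E2_BV i j in auto)
    also have "\<dots> = (\<Sum>z\<in>\<phi> j. of_bool (z \<in> \<phi> i))" by (rule sum_inC[OF phi_in[OF j]])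
    also have "\<dots> = real (card (\<phi> j \<inter> {z. z \<in> \<phi> i}))" using Cs_finC[OF phi_in[OF j]] by simp
    also have "\<phi> j \<inter> {z. z \<in> \<phi> i} = \<phi> i \<inter> \<phi> j" by auto
    finally show ?thesis using inter_val[OF phi_in[OF i] phi_in[OF j] phi_inj[OF i j ne]] by simp
  qed
  have b: "(\<Sum>l<c+1. of_bool (E2 (n+i) (n+l)) * of_bool (E2 (n+j) (n+l)) :: real) = 0"
    by (rule sum.neutral) (use E2_le i j in auto)
  show ?thesis unfolding cn2_def split a b using E2_Bi[OF i] E2_Bi[OF j] E2_BB[OF i j] by simp
qed

lemma cn_Bi: assumes j: "j < c + 1"
  shows "cn2 (n+j) (n+c+1) = (if E2 (n+j) (n+c+1) then 0 else Q^2 + Q)"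
proof -
  have a: "(\<Sum>z<n. of_bool (E2 (n+j) z) * of_bool (E2 (n+c+1) z) :: real) = 0" by (rule sum.neutral) (use E2_Vi' in auto)
  have b: "(\<Sum>l<c+1. of_bool (E2 (n+j) (n+l)) * of_bool (E2 (n+c+1) (n+l)) :: real) = 0"
    by (rule sum.neutral) (use E2_le j in auto)
  show ?thesis unfolding cn2_def split a b using E2_Bi[OF j] E2_ii by simp
qed

lemma cn_main: assumes x: "x < NN" and y: "y < NN" and ne: "x \<noteq> y"
  shows "cn2 x y = (if E2 x y then 0 else Q^2 + Q)"
  using x
proof (cases rule: types)
  case 1
  show ?thesis using y
  proof (cases rule: types)
    case 1
    then show ?thesis using cn_VV \<open>x < n\<close> ne by blast
  next
    case (2 j)
    then show ?thesis using cn_VB[OF \<open>x < n\<close>] by simp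
  next
    case 3
    then show ?thesis using cn_Vi[OF \<open>x < n\<close>] by simp
  qed
next
  case (2 i)
  show ?thesis using y
  proof (cases rule: types)
    case 1
    then show ?thesis using cn_VB[OF 1 2(1)] 2 cn2_sym E2_sym x y by metis
  next
    case (2 j)
    then show ?thesis using cn_BB[OF \<open>i < c+1\<close> \<open>j < c+1\<close>] \<open>x = n + i\<close> ne by auto
  next
    case 3
    then show ?thesis using cn_Bi[OF \<open>i < c+1\<close>] \<open>x = n + i\<close> by simp
  qed
next
  case 3
  show ?thesis using y
  proof (cases rule: types)
    case 1
    then show ?thesis using cn_Vi[OF 1] 3 cn2_sym E2_sym x y by metis
  next
    case (2 j)
    then show ?thesis using cn_Bi[OF 2(1)] 3 cn2_sym E2_sym x y by metis
  next
    case 3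
    then show ?thesis using \<open>x = n + c + 1\<close> ne by simp
  qed
qed

end


lemma Aop_lin: "Aop n E (\<lambda>x. a * f x + b * g x) y = a * Aop n E f y + b * Aop n E g y"
  unfolding Aop_def by (simp add: sum.distrib sum_distrib_left algebra_simps)

lemma card_sum: "real (card {z. z < m \<and> P z}) = (\<Sum>z<m. of_bool (P z))" for m :: nat
proof -
  have "{z. z < m \<and> P z} = {z\<in>{..<m}. P z}" by auto
  then have "real (card {z. z < m \<and> P z}) = (\<Sum>z\<in>{z\<in>{..<m}. P z}. (1::real))" by simp
  also have "\<dots> = (\<Sum>z<m. if P z then 1 else 0)" by (rule sum.inter_filter) (rule finite_lessThan)
  also have "\<dots> = (\<Sum>z<m. of_bool (P z))" by (simp add: of_bool_def)
  finally show ?thesis .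
qed

context cfg2 begin

lemma srg2: "strongly_regular NN E2 (c+1) 0 (q^2+q)"
  unfolding strongly_regular_def simple_graph_def
proof (intro conjI allI impI)
  fix x y assume "x < NN" "y < NN" then show "E2 x y = E2 y x" by (rule E2_sym)
next
  fix x assume "x < NN" then show "\<not> E2 x x" by (rule E2_irr)
next
  fix x assume x: "x < NN"
  have "real (card {y. y < NN \<and> E2 x y}) = real c + 1" unfolding card_sum by (rule deg2[OF x])
  then have "real (card {y. y < NN \<and> E2 x y}) = real (c + 1)" by simp
  then show "card {y. y < NN \<and> E2 x y} = c + 1" by (simp only: of_nat_eq_iff)
next
  fix x y assume x: "x < NN" and y: "y < NN" and h: "x \<noteq> y \<and> E2 x y"
  have "real (card {z. z < NN \<and> E2 x z \<and> E2 y z}) = cn2 x y"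
    unfolding cn2_def card_sum by (intro sum.cong refl) simp
  also have "\<dots> = 0" using cn_main[OF x y] h by simp
  finally show "card {z. z < NN \<and> E2 x z \<and> E2 y z} = 0" by simp
next
  fix x y assume x: "x < NN" and y: "y < NN" and h: "x \<noteq> y \<and> \<not> E2 x y"
  have "real (card {z. z < NN \<and> E2 x z \<and> E2 y z}) = cn2 x y"
    unfolding cn2_def card_sum by (intro sum.cong refl) simp
  also have "\<dots> = real (q^2 + q)" using cn_main[OF x y] h by simp
  finally show "card {z. z < NN \<and> E2 x z \<and> E2 y z} = q^2 + q" by (simp only: of_nat_eq_iff)
qed

lemma NN_ge2: "NN \<ge> 2" unfolding NN_def by simp

lemma eig_in: assumes ev: "\<And>x. x < NN \<Longrightarrow> Aop NN E2 f x = \<theta> * f x" and nz: "x0 < NN" "f x0 \<noteq> 0"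
  shows "\<theta> = real c + 1 \<or> \<theta> = Q \<or> \<theta> = - (Q^2 + 2 * Q)"
proof (cases "\<theta> = real (c + 1)")
  case True then show ?thesis by simp
next
  case False
  have rc1: "real (c+1) = Q^3 + 3*Q^2 + Q" unfolding of_nat_add rc by simp (simp add: algebra_simps power2_eq_square power3_eq_cube)
  have rq: "real (q^2+q) = Q^2 + Q" by simp
  have e: "\<theta>^2 = (Q^3 + 3*Q^2 + Q) - (Q^2+Q) + (0 - (Q^2+Q)) * \<theta>"
    using srg_eig(2)[OF srg2 ev nz False] unfolding rc1 rq of_nat_0 .
  have "(\<theta> - Q) * (\<theta> + (Q^2 + 2*Q)) = \<theta>^2 - ((Q^3 + 3*Q^2 + Q) - (Q^2+Q) + (0 - (Q^2+Q)) * \<theta>)"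
    by (simp add: algebra_simps power2_eq_square power3_eq_cube)
  then have "(\<theta> - Q) * (\<theta> + (Q^2 + 2*Q)) = 0" using e by simp
  then have "\<theta> - Q = 0 \<or> \<theta> + (Q^2 + 2*Q) = 0" by simp
  then show ?thesis by auto
qed

definition "f0 = (\<lambda>z. of_bool (z = 0) - of_bool (z = 1) :: real)"

lemma f0_sum: "(\<Sum>z<NN. f0 z) = 0"
proof -
  have "(\<Sum>z<NN. f0 z) = (\<Sum>z<NN. of_bool (z = 0)) - (\<Sum>z<NN. of_bool (z = (1::nat)))"
    unfolding f0_def by (simp add: sum_subtractf)
  also have "(\<Sum>z<NN. of_bool (z = 0) :: real) = 1"
  proof -
    have "(\<Sum>z<NN. of_bool (z = 0) :: real) = real (card ({..<NN} \<inter> {z. z = 0}))" by simp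
    also have "{..<NN} \<inter> {z. z = 0} = {0}" using NN_ge2 by auto
    finally show ?thesis by simp
  qed
  also have "(\<Sum>z<NN. of_bool (z = (1::nat)) :: real) = 1"
  proof -
    have "(\<Sum>z<NN. of_bool (z = (1::nat)) :: real) = real (card ({..<NN} \<inter> {z. z = 1}))" by simp
    also have "{..<NN} \<inter> {z. z = (1::nat)} = {1}" using NN_ge2 by auto
    finally show ?thesis by simp
  qed
  finally show ?thesis by simp
qed

lemma quad2: "x < NN \<Longrightarrow> Aop NN E2 (Aop NN E2 f0) x = (Q^3 + 2*Q^2) * f0 x - (Q^2 + Q) * Aop NN E2 f0 x"
proof -
  assume x: "x < NN"
  have i1: "real (c + 1) - real (q^2 + q) = Q^3 + 2*Q^2" unfolding of_nat_add rc by simp (simp add: algebra_simps power2_eq_square power3_eq_cube)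
  have i2: "real 0 - real (q^2 + q) = - (Q^2 + Q)" by simp
  show ?thesis using srg_quad[OF srg2 f0_sum x, unfolded i1 i2] by (simp add: algebra_simps)
qed

lemma A_f0_0: "Aop NN E2 f0 0 = - of_bool (E2 0 1)"
proof -
  have "Aop NN E2 f0 0 = (\<Sum>y<NN. of_bool (E2 0 y) * of_bool (y = 0)) - (\<Sum>y<NN. of_bool (E2 0 y) * of_bool (y = 1))"
    unfolding Aop_def f0_def by (simp add: algebra_simps sum_subtractf)
  also have "(\<Sum>y<NN. of_bool (E2 0 y) * of_bool (y = 0) :: real) = 0"
  proof (rule sum.neutral, rule ballI)
    fix y assume "y \<in> {..<NN}"
    show "of_bool (E2 0 y) * of_bool (y = 0) = (0::real)"
    proof (cases "y = 0")
      case True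
      then show ?thesis using E2_irr[of 0] NN_ge2 by simp
    qed simp
  qed
  also have "(\<Sum>y<NN. of_bool (E2 0 y) * of_bool (y = 1) :: real) = (\<Sum>y\<in>{1}. of_bool (E2 0 y))"
    by (rule sum.mono_neutral_cong_right) (use NN_ge2 in auto)
  finally show ?thesis by simp
qed

lemma eig_q: "\<exists>g. (\<exists>x<NN. g x \<noteq> 0) \<and> (\<forall>x<NN. Aop NN E2 g x = Q * g x)"
proof -
  define g where "g = (\<lambda>x. 1 * Aop NN E2 f0 x + (Q^2 + 2*Q) * f0 x)"
  have "\<forall>x<NN. Aop NN E2 g x = Q * g x"
  proof (intro allI impI)
    fix x assume x: "x < NN"
    have "Aop NN E2 g x = Aop NN E2 (Aop NN E2 f0) x + (Q^2 + 2*Q) * Aop NN E2 f0 x"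
      unfolding g_def Aop_lin by simp
    also have "\<dots> = Q * g x" unfolding g_def quad2[OF x] by (simp add: algebra_simps power2_eq_square power3_eq_cube)
    finally show "Aop NN E2 g x = Q * g x" .
  qed
  moreover have "g 0 \<noteq> 0"
  proof -
    have "g 0 = Q^2 + 2*Q - of_bool (E2 0 1)" unfolding g_def A_f0_0 by (simp add: f0_def)
    moreover have "Q^2 + 2*Q \<ge> 3" using Qpos by (simp add: power2_eq_square) (smt (verit) Qpos mult_ge1_I)
    ultimately show ?thesis by (cases "E2 0 1") auto
  qed
  moreover have "0 < NN" using NN_ge2 by simp
  ultimately show ?thesis by blast
qed

lemma eig_s: "\<exists>g. (\<exists>x<NN. g x \<noteq> 0) \<and> (\<forall>x<NN. Aop NN E2 g x = - (Q^2 + 2*Q) * g x)"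
proof -
  define g where "g = (\<lambda>x. 1 * Aop NN E2 f0 x + (- Q) * f0 x)"
  have "\<forall>x<NN. Aop NN E2 g x = - (Q^2 + 2*Q) * g x"
  proof (intro allI impI)
    fix x assume x: "x < NN"
    have "Aop NN E2 g x = Aop NN E2 (Aop NN E2 f0) x + (- Q) * Aop NN E2 f0 x"
      unfolding g_def Aop_lin by simp
    also have "\<dots> = - (Q^2 + 2*Q) * g x" unfolding g_def quad2[OF x] by (simp add: algebra_simps power2_eq_square power3_eq_cube)
    finally show "Aop NN E2 g x = - (Q^2 + 2*Q) * g x" .
  qed
  moreover have "g 0 \<noteq> 0"
  proof -
    have "g 0 = - Q - of_bool (E2 0 1)" unfolding g_def A_f0_0 by (simp add: f0_def)
    then show ?thesis using Qpos by (cases "E2 0 1") auto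
  qed
  moreover have "0 < NN" using NN_ge2 by simp
  ultimately show ?thesis by blast
qed

lemma eig_k: "\<forall>x<NN. Aop NN E2 (\<lambda>_. 1) x = (real c + 1) * 1"
  unfolding Aop_def using deg2 by simp

lemma NN_val: "NN = q^2 * (q + 3)^2"
proof -
  have "real NN = real n + real c + 2" unfolding NN_def by simp
  also have "\<dots> = Q^2 * (Q + 3)^2" unfolding rn rc by (simp add: algebra_simps power2_eq_square power3_eq_cube)
  also have "\<dots> = real (q^2 * (q + 3)^2)" by simp
  finally show ?thesis by (simp only: of_nat_eq_iff)
qed

end


lemma Aop_cong: "(\<And>j. j < n \<Longrightarrow> f j = g j) \<Longrightarrow> Aop n E f x = Aop n E g x"
  unfolding Aop_def by (intro sum.cong refl) simp

lemma adj_mult: assumes "v \<in> carrier_vec n" "i < n"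
  shows "(adj_matrix n E *\<^sub>v v) $ i = Aop n E (\<lambda>j. v $ j) i"
proof -
  have "(adj_matrix n E *\<^sub>v v) $ i = row (adj_matrix n E) i \<bullet> v"
    using assms unfolding adj_matrix_def by simp
  also have "\<dots> = (\<Sum>j\<in>{0..<n}. row (adj_matrix n E) i $ j * v $ j)"
    using assms unfolding scalar_prod_def by simp
  also have "\<dots> = (\<Sum>j<n. of_bool (E i j) * v $ j)"
    by (rule sum.cong) (use assms in \<open>auto simp: adj_matrix_def\<close>)
  finally show ?thesis unfolding Aop_def .
qed

lemma eig_bridge1: assumes "eigenvalue (adj_matrix n E) \<theta>"
  shows "\<exists>f. (\<exists>x<n. f x \<noteq> 0) \<and> (\<forall>x<n. Aop n E f x = \<theta> * f x)"
proof -
  obtain v where ev: "eigenvector (adj_matrix n E) v \<theta>" using assms unfolding eigenvalue_def by blast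
  have dr: "dim_row (adj_matrix n E) = n" unfolding adj_matrix_def by simp
  have vc: "v \<in> carrier_vec n" and vnz: "v \<noteq> 0\<^sub>v n" and eq: "adj_matrix n E *\<^sub>v v = \<theta> \<cdot>\<^sub>v v"
    using ev unfolding eigenvector_def dr by auto
  have dv: "dim_vec v = n" using vc by auto
  have "\<exists>x<n. v $ x \<noteq> 0"
  proof (rule ccontr)
    assume "\<not> (\<exists>x<n. v $ x \<noteq> 0)"
    then have "v = 0\<^sub>v n" using dv by (intro eq_vecI) auto
    with vnz show False by simp
  qed
  moreover have "\<forall>x<n. Aop n E (\<lambda>j. v $ j) x = \<theta> * v $ x"
  proof (intro allI impI)
    fix x assume x: "x < n"
    have "Aop n E (\<lambda>j. v $ j) x = (adj_matrix n E *\<^sub>v v) $ x" using adj_mult[OF vc x] by simp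
    also have "\<dots> = \<theta> * v $ x" using eq x dv by simp
    finally show "Aop n E (\<lambda>j. v $ j) x = \<theta> * v $ x" .
  qed
  ultimately show ?thesis by blast
qed

lemma eig_bridge2: assumes nz: "x0 < n" "f x0 \<noteq> 0" and ev: "\<forall>x<n. Aop n E f x = \<theta> * f x"
  shows "eigenvalue (adj_matrix n E) \<theta>"
proof -
  define v where "v = vec n f"
  have vc: "v \<in> carrier_vec n" unfolding v_def by simp
  have dr: "dim_row (adj_matrix n E) = n" unfolding adj_matrix_def by simp
  have "v \<noteq> 0\<^sub>v n"
  proof
    assume "v = 0\<^sub>v n"
    then have "v $ x0 = 0" using nz by simp
    then show False using nz unfolding v_def by simp
  qed
  moreover have "adj_matrix n E *\<^sub>v v = \<theta> \<cdot>\<^sub>v v"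
  proof (rule eq_vecI)
    fix i assume "i < dim_vec (\<theta> \<cdot>\<^sub>v v)"
    then have i: "i < n" unfolding v_def by simp
    have "(adj_matrix n E *\<^sub>v v) $ i = Aop n E (\<lambda>j. v $ j) i" by (rule adj_mult[OF vc i])
    also have "\<dots> = Aop n E f i" by (rule Aop_cong) (simp add: v_def)
    also have "\<dots> = \<theta> * f i" using ev i by simp
    also have "\<dots> = (\<theta> \<cdot>\<^sub>v v) $ i" using i unfolding v_def by simp
    finally show "(adj_matrix n E *\<^sub>v v) $ i = (\<theta> \<cdot>\<^sub>v v) $ i" .
  next
    show "dim_vec (adj_matrix n E *\<^sub>v v) = dim_vec (\<theta> \<cdot>\<^sub>v v)" using dr unfolding v_def by simp
  qed
  ultimately have "eigenvector (adj_matrix n E) v \<theta>" unfolding eigenvector_def dr using vc by simp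
  then show ?thesis unfolding eigenvalue_def by blast
qed

lemma srg_A1: assumes srg: "strongly_regular n E k lam mu" and x: "x < n"
  shows "real k * real k = real k + real lam * real k + real mu * (real n - 1 - real k)"
proof -
  have a1: "\<And>y. y < n \<Longrightarrow> Aop n E (\<lambda>_. 1) y = real k" unfolding Aop_def using srg_deg[OF srg] by simp
  have "Aop n E (Aop n E (\<lambda>_. 1)) x = Aop n E (\<lambda>_. real k) x" by (rule Aop_cong) (rule a1)
  also have "\<dots> = real k * real k" unfolding Aop_def using srg_deg[OF srg x]
    by (simp add: sum_distrib_right[symmetric])
  finally have "real k * real k = real k * 1 + real lam * real k + real mu * ((\<Sum>z<n. 1) - 1 - real k)"
    using srg_A2[OF srg x, of "\<lambda>_. 1"] a1[OF x] by simp
  then show ?thesis by simp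
qed

lemma mu_le_k: assumes srg: "strongly_regular n E k lam mu" and big: "k + 1 < n"
  shows "mu \<le> k"
proof -
  have n0: "0 < n" using big by simp
  have ck: "card {y. y < n \<and> E 0 y} = k" using srg n0 unfolding strongly_regular_def by blast
  have sub: "{y. y < n \<and> E 0 y} \<union> {0} \<subseteq> {..<n}" using n0 by auto
  have cle: "card ({y. y < n \<and> E 0 y} \<union> {0}) \<le> k + 1"
    using card_Un_le[of "{y. y < n \<and> E 0 y}" "{0}"] ck by simp
  have ne: "{y. y < n \<and> E 0 y} \<union> {0} \<noteq> {..<n}"
  proof
    assume eq: "{y. y < n \<and> E 0 y} \<union> {0} = {..<n}"
    have "card ({y. y < n \<and> E 0 y} \<union> {0}) = n" unfolding eq by simp
    with cle big show False by simp
  qed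
  obtain y where y: "y < n" "y \<notin> {z. z < n \<and> E 0 z} \<union> {0}" using sub ne by blast
  then have ny: "y \<noteq> 0" "\<not> E 0 y" by auto
  have "mu = card {z. z < n \<and> E 0 z \<and> E y z}" using srg n0 y ny unfolding strongly_regular_def by auto
  also have "\<dots> \<le> card {z. z < n \<and> E 0 z}" by (rule card_mono) auto
  finally show ?thesis using ck by simp
qed

lemma nat_div_contra: assumes "A * (q + 1) = q * (q^2 + 3*q + 1)" "(q::nat) > 0" shows False
proof -
  have e: "q * (q^2 + 3*q + 1) = (q^2 + 2*q - 1) * (q + 1) + 1"
  proof -
    define p where "p = q^2 + 2*q - 1"
    have "q^2 + 2*q \<ge> 1" using assms(2) by (simp add: Suc_le_eq)
    then have hp: "int p = int q^2 + 2 * int q - 1" unfolding p_def by (simp add: of_nat_diff)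
    have "int (p * (q + 1) + 1) = int (q * (q^2 + 3*q + 1))"
      by (simp add: hp algebra_simps power2_eq_square)
    then show ?thesis unfolding p_def by (simp only: of_nat_eq_iff)
  qed
  show False
  proof (cases "A \<le> q^2 + 2*q - 1")
    case True
    then have "A * (q+1) \<le> (q^2 + 2*q - 1) * (q + 1)" by (rule mult_right_mono) simp
    then show False using assms(1) e by simp
  next
    case False
    then have "A \<ge> (q^2 + 2*q - 1) + 1" by simp
    then have "A * (q+1) \<ge> ((q^2 + 2*q - 1) + 1) * (q + 1)" by (rule mult_right_mono) simp
    then have "A * (q+1) \<ge> (q^2 + 2*q - 1) * (q + 1) + (q + 1)" by (simp add: algebra_simps)
    then show False using assms e by simp
  qed
qed

theorem lemma7p1:
  fixes q n k lam mu :: nat and E :: "nat \<Rightarrow> nat \<Rightarrow> bool"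
  assumes "q > 0"
    and "strongly_regular n E k lam mu"
    and "primitive n E"
    and "n = (q^2 + 2*q - 1) * (q^2 + 3*q + 1)"
    and "srg_eigenvalues n E k (real q) (- (real q^2 + real q))"
    and "real n * (- (real q^2 + real q)) =
           real (eig_mult (adj_matrix n E) (- (real q^2 + real q))) *
           ((- (real q^2 + real q)) - real k)"
    and "card {C. delsarte_coclique n E k (- (real q^2 + real q)) C} =
           eig_mult (adj_matrix n E) (- (real q^2 + real q)) + 1"
  shows "\<exists>n' k' lam' mu' E'. strongly_regular n' E' k' lam' mu' \<and>
           n' = q^2 * (q + 3)^2 \<and>
           srg_eigenvalues n' E' k' (real q) (- (real q^2 + 2 * real q))"
proof -
  note qpos = assms(1) and srg = assms(2) and ndef = assms(4) and eigs = assms(5)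
  define R where "R = real q"
  define s where "s = - (R^2 + R)"
  define m where "m = eig_mult (adj_matrix n E) s"
  have sdef': "- (real q^2 + real q) = s" unfolding s_def R_def ..
  have R1: "R \<ge> 1" unfolding R_def using qpos by simp
  have hq2: "q^2 + 2*q \<ge> 1" using qpos by (simp add: Suc_le_eq)
  have hr1: "real (q^2+2*q-1) = R^2+2*R-1" using hq2 unfolding R_def by (simp add: of_nat_diff)
  have hn: "real n = (R^2+2*R-1)*(R^2+3*R+1)"
  proof -
    have "real n = real (q^2+2*q-1) * real (q^2+3*q+1)" by (simp only: ndef of_nat_mult)
    then show ?thesis unfolding hr1 unfolding R_def by simp
  qed
  have spos: "s < 0" unfolding s_def using R1 zero_le_power2[of R] by linarith
  have evs: "eigenvalue (adj_matrix n E) s" "eigenvalue (adj_matrix n E) R"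
    using eigs unfolding srg_eigenvalues_def sdef' R_def by auto
  obtain fs where fs: "\<exists>x<n. fs x \<noteq> 0" "\<forall>x<n. Aop n E fs x = s * fs x" using eig_bridge1[OF evs(1)] by blast
  obtain xs where xs: "xs < n" "fs xs \<noteq> 0" using fs(1) by blast
  have sk: "s \<noteq> real k" using spos by simp
  have evfs: "\<And>x. x < n \<Longrightarrow> Aop n E fs x = s * fs x" using fs(2) by blast
  have es: "s^2 = real k - real mu + (real lam - real mu) * s"
    by (rule srg_eig(2)[OF srg evfs xs sk])
  obtain fq where fq: "\<exists>x<n. fq x \<noteq> 0" "\<forall>x<n. Aop n E fq x = R * fq x" using eig_bridge1[OF evs(2)] by blast
  obtain xq where xq: "xq < n" "fq xq \<noteq> 0" using fq(1) by blast
  have qk: "R \<noteq> real k"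
  proof
    assume qk: "R = real k"
    have "q = k" using qk unfolding R_def by simp
    moreover have "q + 1 < n"
    proof -
      have "q^2 + 3*q + 1 \<ge> q + 2" using hq2 by linarith
      moreover have "q^2 + 2*q - 1 \<ge> 1" using qpos by linarith
      ultimately have "(q^2 + 2*q - 1) * (q^2 + 3*q + 1) \<ge> 1 * (q + 2)" by (intro mult_le_mono) auto
      then show ?thesis using ndef by simp
    qed
    ultimately have "mu \<le> k" using mu_le_k[OF srg] by simp
    then have muQ: "real mu \<le> R" using qk by simp
    have a: "real k - real mu + (real lam - real mu) * s = R + real mu * (R^2 + R - 1) - real lam * (R^2 + R)"
      unfolding s_def qk by (simp add: algebra_simps)
    have "R^2 + R \<ge> 0" using R1 zero_le_power2[of R] by linarith
    then have "real lam * (R^2 + R) \<ge> 0" by simp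
    then have "real k - real mu + (real lam - real mu) * s \<le> R + real mu * (R^2 + R - 1)" using a by linarith
    also have "\<dots> \<le> R + R * (R^2 + R - 1)"
    proof -
      have "R^2 + R - 1 \<ge> 0" using R1 zero_le_power2[of R] by linarith
      then have "real mu * (R^2 + R - 1) \<le> R * (R^2 + R - 1)" using muQ by (rule mult_right_mono[rotated])
      then show ?thesis by simp
    qed
    also have "\<dots> < (R^2+R)^2"
    proof -
      have d: "(R^2+R)^2 - (R + R * (R^2 + R - 1)) = R^3 * (R + 1)" by (simp add: algebra_simps power2_eq_square power3_eq_cube)
      have "R^3 \<ge> 1" using R1 by (simp add: one_le_power)
      then have "R^3 * (R + 1) > 0" using R1 by (simp add: mult_pos_pos)
      then show ?thesis using d by simp
    qed
    also have "(R^2+R)^2 = s^2" unfolding s_def by (simp only: power2_minus)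
    finally show False using es by simp
  qed
  have evfq: "\<And>x. x < n \<Longrightarrow> Aop n E fq x = R * fq x" using fq(2) by blast
  have eq: "R^2 = real k - real mu + (real lam - real mu) * R"
    by (rule srg_eig(2)[OF srg evfq xq qk])
  have sum_qs: "R + s = real lam - real mu"
  proof -
    have h1: "R^2 - s^2 = (real lam - real mu) * R - (real lam - real mu) * s" using es eq by linarith
    have h2: "(R - s) * (R + s) = R^2 - s^2" by (simp add: algebra_simps power2_eq_square)
    have h3: "(real lam - real mu) * R - (real lam - real mu) * s = (R - s) * (real lam - real mu)"
      by (simp add: algebra_simps)
    have "(R - s) * (R + s) = (R - s) * (real lam - real mu)" using h1 h2 h3 by simp
    moreover have "R - s \<noteq> 0" using spos R1 by simp
    ultimately show ?thesis by simp
  qed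
  have eq2: "R^2 = real k - real mu + (R + s) * R" using eq unfolding sum_qs[symmetric] .
  have "(R + s) * R = R^2 + R * s" by (simp add: algebra_simps power2_eq_square)
  then have prod_qs: "real mu = real k + R * s" using eq2 by linarith
  have "R * s = - (R^3 + R^2)" unfolding s_def by (simp add: algebra_simps power2_eq_square power3_eq_cube)
  then have muv: "real mu = real k - R^3 - R^2" using prod_qs by linarith
  have lamv: "real lam = real k - R^3 - 2*R^2" using sum_qs muv s_def by linarith
  have n0: "0 < n" using xs by simp
  have cnt: "real k * real k = real k + real lam * real k + real mu * (real n - 1 - real k)"
    using srg_A1[OF srg n0] .
  have quad0: "(real k - (R^3 + 2*R^2)) * (real k - (real n - R^3 - 3*R^2))
      = real k * real k - (real k + real lam * real k + real mu * (real n - 1 - real k))"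
    unfolding lamv muv hn by (simp add: algebra_simps power2_eq_square power3_eq_cube)
  have quad: "(real k - (R^3 + 2*R^2)) * (real k - (real n - R^3 - 3*R^2)) = 0"
    using quad0 cnt by linarith
  define cc where "cc = (q^2+2*q-1)*(q+1)"
  have hc: "real cc = (R^2+2*R-1)*(R+1)"
  proof -
    have "real cc = real (q^2+2*q-1) * real (q+1)" by (simp only: cc_def of_nat_mult)
    then show ?thesis unfolding hr1 unfolding R_def by simp
  qed
  have pos1: "R^2 + 2*R - 1 > 0"
  proof -
    have "R^2 \<ge> 1" using R1 by (simp add: one_le_power)
    then show ?thesis using R1 by linarith
  qed
  have "{C. delsarte_coclique n E k (- (real q^2 + real q)) C} \<noteq> {}"
  proof
    assume "{C. delsarte_coclique n E k (- (real q^2 + real q)) C} = {}"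
    then have "card {C. delsarte_coclique n E k (- (real q^2 + real q)) C} = 0" by simp
    then show False using assms(7) by simp
  qed
  then obtain C0 where C0: "delsarte_coclique n E k s C0" unfolding sdef' by blast
  have kv: "real k = R^3 + 2*R^2"
  proof (rule ccontr)
    assume "real k \<noteq> R^3 + 2*R^2"
    moreover have "real k - (R^3 + 2*R^2) = 0 \<or> real k - (real n - R^3 - 3*R^2) = 0" using quad by simp
    ultimately have kv2: "real k = real n - R^3 - 3*R^2" by linarith
    define A where "A = card C0"
    have "real A = real n * s / (s - real k)" using C0 unfolding delsarte_coclique_def A_def by simp
    moreover have "s - real k \<noteq> 0" using sk by simp
    ultimately have "real A * (s - real k) = real n * s" by (simp add: field_simps)
    moreover have "(R^2+2*R-1)*(R+1) * (real A * (R+1) - R*(R^2+3*R+1)) = - (real A * (s - real k) - real n * s)"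
      unfolding kv2 hn s_def by (simp add: algebra_simps power2_eq_square power3_eq_cube)
    ultimately have "(R^2+2*R-1)*(R+1) * (real A * (R+1) - R*(R^2+3*R+1)) = 0" by simp
    moreover have "(R^2+2*R-1)*(R+1) \<noteq> 0" using pos1 R1 by simp
    ultimately have "real A * (R+1) = R*(R^2+3*R+1)" by simp
    then have "real (A * (q+1)) = real (q * (q^2+3*q+1))" unfolding R_def
      by (simp only: of_nat_mult of_nat_add of_nat_power of_nat_1 of_nat_numeral)
    then have "A * (q+1) = q * (q^2+3*q+1)" by (simp only: of_nat_eq_iff)
    then show False using nat_div_contra qpos by blast
  qed
  have kdef: "k = q^3 + 2*q^2"
  proof -
    have "real k = real (q^3 + 2*q^2)" using kv unfolding R_def by simp
    then show ?thesis by (simp only: of_nat_eq_iff)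
  qed
  have mudef: "mu = q^2"
  proof -
    have "real mu = real (q^2)" using muv kv unfolding R_def by simp
    then show ?thesis by (simp only: of_nat_eq_iff)
  qed
  have lamdef: "lam = 0" using lamv kv by simp
  have dval: "real n * s / (s - real k) = real cc"
  proof -
    have "s - real k \<noteq> 0" using sk by simp
    moreover have "real n * s = real cc * (s - real k)" unfolding hn hc kv s_def by (simp add: algebra_simps power2_eq_square power3_eq_cube)
    ultimately show ?thesis by (simp add: field_simps)
  qed
  have mdef: "m = cc"
  proof -
    have "real n * s = real m * (s - real k)" using assms(6) unfolding sdef' m_def[symmetric] .
    moreover have "s - real k \<noteq> 0" using sk by simp
    ultimately have "real m = real n * s / (s - real k)" by (simp add: field_simps)
    then show ?thesis using dval by simp
  qed
  define Cs where "Cs = {C. coclique n E C \<and> card C = cc}"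
  have CsD: "{C. delsarte_coclique n E k (- (real q^2 + real q)) C} = Cs"
    unfolding Cs_def sdef' delsarte_coclique_def dval by simp
  have cardCs: "card Cs = cc + 1" using assms(7) unfolding sdef' m_def[symmetric] mdef CsD[unfolded sdef'] .
  have srg0: "strongly_regular n E k 0 (q^2)" using srg lamdef mudef by simp
  interpret G: cfg q n E k cc Cs
    by (rule cfg.intro) (fact qpos, fact srg0, fact kdef, fact ndef, fact cc_def, fact Cs_def, fact cardCs)
  obtain \<phi> where phi0: "bij_betw \<phi> {0..<card Cs} Cs" using ex_bij_betw_nat_finite[OF G.Cs_fin] by blast
  have phi: "bij_betw \<phi> {..<cc+1} Cs" using phi0 unfolding cardCs atLeast0LessThan .
  interpret H: cfg2 q n E k cc Cs \<phi>
    by (intro cfg2.intro cfg2_axioms.intro G.cfg_axioms phi)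
  show ?thesis
  proof (intro exI conjI)
    show "strongly_regular H.NN H.E2 (cc+1) 0 (q^2+q)" by (rule H.srg2)
    show "H.NN = q^2 * (q+3)^2" by (rule H.NN_val)
    show "srg_eigenvalues H.NN H.E2 (cc+1) (real q) (- (real q^2 + 2 * real q))"
      unfolding srg_eigenvalues_def
    proof (intro conjI allI impI)
      have NN0: "0 < H.NN" using H.NN_ge2 by simp
      show "eigenvalue (adj_matrix H.NN H.E2) (real (cc + 1))"
        by (rule eig_bridge2[of 0 _ "\<lambda>_. 1"]) (use NN0 H.eig_k in auto)
      obtain g where g: "\<exists>x<H.NN. g x \<noteq> 0" "\<forall>x<H.NN. Aop H.NN H.E2 g x = real q * g x" using H.eig_q by blast
      then obtain x0 where "x0 < H.NN" "g x0 \<noteq> 0" by blast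
      then show "eigenvalue (adj_matrix H.NN H.E2) (real q)" using eig_bridge2 g(2) by blast
      obtain g' where g': "\<exists>x<H.NN. g' x \<noteq> 0" "\<forall>x<H.NN. Aop H.NN H.E2 g' x = - (real q^2 + 2 * real q) * g' x"
        using H.eig_s by blast
      then obtain x1 where "x1 < H.NN" "g' x1 \<noteq> 0" by blast
      then show "eigenvalue (adj_matrix H.NN H.E2) (- (real q^2 + 2 * real q))" using eig_bridge2 g'(2) by blast
      have "q^2 + 2*q - 1 \<ge> 1" using qpos by linarith
      then have "1 * q \<le> (q^2+2*q-1) * (q+1)" by (intro mult_le_mono) auto
      then have "q \<le> cc" unfolding cc_def by simp
      then show "real q \<le> real (cc + 1)" by simp
      show "0 \<le> real q" by simp
      have "real q > 0" using qpos by simp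
      then show "0 > - (real q^2 + 2 * real q)" using zero_le_power2[of "real q"] by linarith
    next
      fix r assume "eigenvalue (adj_matrix H.NN H.E2) r"
      then obtain f where f: "\<exists>x<H.NN. f x \<noteq> 0" "\<forall>x<H.NN. Aop H.NN H.E2 f x = r * f x" using eig_bridge1 by blast
      then obtain x0 where x0: "x0 < H.NN" "f x0 \<noteq> 0" by blast
      have evf: "\<And>x. x < H.NN \<Longrightarrow> Aop H.NN H.E2 f x = r * f x" using f(2) by blast
      have "r = real cc + 1 \<or> r = real q \<or> r = - ((real q)^2 + 2 * real q)"
        by (rule H.eig_in[OF evf x0])
      then show "r \<in> {real (cc + 1), real q, - (real q^2 + 2 * real q)}" by auto
    qed
  qed
qed

end
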